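(* Let $H$ be a connected triangle-free graph with no full star-cutset. If $H$ is a restricted frame graph, then $H$ is either a path or a chandelier.
   Context: A full star-cutset of a connected graph $G$ is a set $N[u]=\{u\}\cup N(u)$ whose removal disconnects $G$. A chandelier is a graph obtained from a tree $T$ by adding a new vertex adjacent to every leaf of $T$. A frame is the boundary of an axis-parallel box $I\times J\subset\mathbb R^2$. A graph $G$ is a restricted frame graph if there is a family of frames $\{F_v : v\in V(G)\}$ with $uv\in E(G)$ iff $F_u\cap F_v\neq\emptyset$, satisfying: (1) corners of a frame do not coincide with any point of another frame; (2) the left side of any frame does not intersect any other frame; (3) if the right side of a frame intersects a second frame, this right side intersects both the top and the bottom side of the second frame; (4) if two frames have non-empty intersection, then no frame is entirely contained in the intersection of the two regions bounded by these two frames. *)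

theory Defs
  imports Main "HOL-Library.Library"
begin

definition graph :: "'a set \<Rightarrow> ('a \<Rightarrow> 'a \<Rightarrow> bool) \<Rightarrow> bool" where
  "graph V E \<longleftrightarrow> finite V \<and> (\<forall>u v. E u v \<longrightarrow> u \<in> V \<and> v \<in> V \<and> u \<noteq> v \<and> E v u)"

definition reach_in :: "'a set \<Rightarrow> ('a \<Rightarrow> 'a \<Rightarrow> bool) \<Rightarrow> 'a \<Rightarrow> 'a \<Rightarrow> bool" where
  "reach_in S E = (\<lambda>x y. x \<in> S \<and> y \<in> S \<and> E x y)\<^sup>*\<^sup>*"

definition connected_in :: "'a set \<Rightarrow> ('a \<Rightarrow> 'a \<Rightarrow> bool) \<Rightarrow> bool" where
  "connected_in S E \<longleftrightarrow> S \<noteq> {} \<and> (\<forall>u\<in>S. \<forall>v\<in>S. reach_in S E u v)"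

definition disconnected_in :: "'a set \<Rightarrow> ('a \<Rightarrow> 'a \<Rightarrow> bool) \<Rightarrow> bool" where
  "disconnected_in S E \<longleftrightarrow> (\<exists>u\<in>S. \<exists>v\<in>S. \<not> reach_in S E u v)"

definition triangle_free :: "'a set \<Rightarrow> ('a \<Rightarrow> 'a \<Rightarrow> bool) \<Rightarrow> bool" where
  "triangle_free V E \<longleftrightarrow> \<not> (\<exists>a\<in>V. \<exists>b\<in>V. \<exists>c\<in>V. E a b \<and> E b c \<and> E a c)"

definition closed_nbhd :: "'a set \<Rightarrow> ('a \<Rightarrow> 'a \<Rightarrow> bool) \<Rightarrow> 'a \<Rightarrow> 'a set" where
  "closed_nbhd V E u = insert u {v \<in> V. E u v}"

definition has_full_star_cutset :: "'a set \<Rightarrow> ('a \<Rightarrow> 'a \<Rightarrow> bool) \<Rightarrow> bool" where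
  "has_full_star_cutset V E \<longleftrightarrow> (\<exists>u\<in>V. disconnected_in (V - closed_nbhd V E u) E)"

definition is_path_graph :: "'a set \<Rightarrow> ('a \<Rightarrow> 'a \<Rightarrow> bool) \<Rightarrow> bool" where
  "is_path_graph V E \<longleftrightarrow> (\<exists>xs. distinct xs \<and> set xs = V \<and>
      (\<forall>u v. E u v \<longleftrightarrow> (\<exists>i. Suc i < length xs \<and> {u, v} = {xs ! i, xs ! Suc i})))"

definition has_cycle_in :: "'a set \<Rightarrow> ('a \<Rightarrow> 'a \<Rightarrow> bool) \<Rightarrow> bool" where
  "has_cycle_in S E \<longleftrightarrow> (\<exists>cs. length cs \<ge> 3 \<and> distinct cs \<and> set cs \<subseteq> S \<and>
      (\<forall>i. Suc i < length cs \<longrightarrow> E (cs ! i) (cs ! Suc i)) \<and> E (last cs) (hd cs))"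

definition is_tree_in :: "'a set \<Rightarrow> ('a \<Rightarrow> 'a \<Rightarrow> bool) \<Rightarrow> bool" where
  "is_tree_in S E \<longleftrightarrow> connected_in S E \<and> \<not> has_cycle_in S E"

definition is_leaf_in :: "'a set \<Rightarrow> ('a \<Rightarrow> 'a \<Rightarrow> bool) \<Rightarrow> 'a \<Rightarrow> bool" where
  "is_leaf_in S E v \<longleftrightarrow> v \<in> S \<and> card {w \<in> S. E v w} = 1"

text \<open>Chandelier: there is a vertex c such that G - c is a tree T and c is
adjacent exactly to the leaves of T (i.e. G arises from T by adding c).\<close>
definition is_chandelier :: "'a set \<Rightarrow> ('a \<Rightarrow> 'a \<Rightarrow> bool) \<Rightarrow> bool" where
  "is_chandelier V E \<longleftrightarrow> (\<exists>c\<in>V. is_tree_in (V - {c}) E \<and>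
      {w \<in> V. E c w} = {v. is_leaf_in (V - {c}) E v})"

text \<open>An axis-parallel box [x1,x2] x [y1,y2] is encoded as (x1, x2, y1, y2).\<close>
type_synonym box = "real \<times> real \<times> real \<times> real"

definition valid_box :: "box \<Rightarrow> bool" where
  "valid_box B = (case B of (x1, x2, y1, y2) \<Rightarrow> x1 < x2 \<and> y1 < y2)"

definition left_side :: "box \<Rightarrow> (real \<times> real) set" where
  "left_side B = (case B of (x1, x2, y1, y2) \<Rightarrow> {x1} \<times> {y1..y2})"

definition right_side :: "box \<Rightarrow> (real \<times> real) set" where
  "right_side B = (case B of (x1, x2, y1, y2) \<Rightarrow> {x2} \<times> {y1..y2})"

definition bottom_side :: "box \<Rightarrow> (real \<times> real) set" where
  "bottom_side B = (case B of (x1, x2, y1, y2) \<Rightarrow> {x1..x2} \<times> {y1})"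

definition top_side :: "box \<Rightarrow> (real \<times> real) set" where
  "top_side B = (case B of (x1, x2, y1, y2) \<Rightarrow> {x1..x2} \<times> {y2})"

definition corners :: "box \<Rightarrow> (real \<times> real) set" where
  "corners B = (case B of (x1, x2, y1, y2) \<Rightarrow> {(x1, y1), (x1, y2), (x2, y1), (x2, y2)})"

definition frame :: "box \<Rightarrow> (real \<times> real) set" where
  "frame B = left_side B \<union> right_side B \<union> bottom_side B \<union> top_side B"

definition region :: "box \<Rightarrow> (real \<times> real) set" where
  "region B = (case B of (x1, x2, y1, y2) \<Rightarrow> {x1..x2} \<times> {y1..y2})"

definition restricted_frame_graph :: "'a set \<Rightarrow> ('a \<Rightarrow> 'a \<Rightarrow> bool) \<Rightarrow> bool" where
  "restricted_frame_graph V E \<longleftrightarrow> (\<exists>F :: 'a \<Rightarrow> box.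
     (\<forall>v\<in>V. valid_box (F v)) \<and>
     (\<forall>u\<in>V. \<forall>v\<in>V. u \<noteq> v \<longrightarrow> (E u v \<longleftrightarrow> frame (F u) \<inter> frame (F v) \<noteq> {})) \<and>
     \<comment> \<open>(1) corners of a frame avoid every other frame\<close>
     (\<forall>u\<in>V. \<forall>v\<in>V. u \<noteq> v \<longrightarrow> corners (F u) \<inter> frame (F v) = {}) \<and>
     \<comment> \<open>(2) the left side of a frame meets no other frame\<close>
     (\<forall>u\<in>V. \<forall>v\<in>V. u \<noteq> v \<longrightarrow> left_side (F u) \<inter> frame (F v) = {}) \<and>
     \<comment> \<open>(3) a right side meeting another frame meets its top and bottom sides\<close>
     (\<forall>u\<in>V. \<forall>v\<in>V. u \<noteq> v \<longrightarrow> right_side (F u) \<inter> frame (F v) \<noteq> {} \<longrightarrow>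
          right_side (F u) \<inter> top_side (F v) \<noteq> {} \<and> right_side (F u) \<inter> bottom_side (F v) \<noteq> {}) \<and>
     \<comment> \<open>(4) no frame inside the intersection of the regions of two intersecting frames\<close>
     (\<forall>u\<in>V. \<forall>v\<in>V. u \<noteq> v \<longrightarrow> frame (F u) \<inter> frame (F v) \<noteq> {} \<longrightarrow>
          (\<forall>w\<in>V. \<not> frame (F w) \<subseteq> region (F u) \<inter> region (F v))))"

end

theory Submission
  imports Defs
begin

lemma mem_frame: "((x,y) \<in> frame (a1,b1,c1,d1)) \<longleftrightarrow>
  ((x = a1 \<or> x = b1) \<and> c1 \<le> y \<and> y \<le> d1) \<or> (a1 \<le> x \<and> x \<le> b1 \<and> (y = c1 \<or> y = d1))"
  by (auto simp: frame_def left_side_def right_side_def top_side_def bottom_side_def)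

lemma mem_corners: "p \<in> corners (a1,b1,c1,d1) \<longleftrightarrow> p = (a1,c1) \<or> p = (a1,d1) \<or> p = (b1,c1) \<or> p = (b1,d1)"
  by (auto simp: corners_def)

lemma mem_left: "((x,y) \<in> left_side (a1,b1,c1,d1)) \<longleftrightarrow> x = a1 \<and> c1 \<le> y \<and> y \<le> d1"
  by (auto simp: left_side_def)
lemma mem_right: "((x,y) \<in> right_side (a1,b1,c1,d1)) \<longleftrightarrow> x = b1 \<and> c1 \<le> y \<and> y \<le> d1"
  by (auto simp: right_side_def)
lemma mem_top: "((x,y) \<in> top_side (a1,b1,c1,d1)) \<longleftrightarrow> a1 \<le> x \<and> x \<le> b1 \<and> y = d1"
  by (auto simp: top_side_def)
lemma mem_bot: "((x,y) \<in> bottom_side (a1,b1,c1,d1)) \<longleftrightarrow> a1 \<le> x \<and> x \<le> b1 \<and> y = c1"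
  by (auto simp: bottom_side_def)

definition RR :: "real \<Rightarrow> real \<Rightarrow> real \<Rightarrow> real \<Rightarrow> real \<Rightarrow> real \<Rightarrow> real \<Rightarrow> real \<Rightarrow> bool" where
  "RR a1 b1 c1 d1 a2 b2 c2 d2 \<longleftrightarrow> a1 < a2 \<and> a2 < b1 \<and> b1 < b2 \<and> c1 < c2 \<and> d2 < d1"

lemma geo_edge_half:
  assumes v1: "a1 < b1" "c1 < d1" and v2: "a2 < b2" "c2 < d2"
  and cor1: "corners (a1,b1,c1,d1) \<inter> frame (a2,b2,c2,d2) = {}"
  and cor2: "corners (a2,b2,c2,d2) \<inter> frame (a1,b1,c1,d1) = {}"
  and l1: "left_side (a1,b1,c1,d1) \<inter> frame (a2,b2,c2,d2) = {}"
  and r1: "right_side (a1,b1,c1,d1) \<inter> frame (a2,b2,c2,d2) \<noteq> {} \<longrightarrow>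
          right_side (a1,b1,c1,d1) \<inter> top_side (a2,b2,c2,d2) \<noteq> {} \<and> right_side (a1,b1,c1,d1) \<inter> bottom_side (a2,b2,c2,d2) \<noteq> {}"
  and p: "(b1, y) \<in> frame (a2,b2,c2,d2)" "c1 \<le> y" "y \<le> d1"
  shows "RR a1 b1 c1 d1 a2 b2 c2 d2"
proof -
  have "right_side (a1,b1,c1,d1) \<inter> frame (a2,b2,c2,d2) \<noteq> {}"
  proof -
    have "(b1,y) \<in> right_side (a1,b1,c1,d1)" using p by (simp add: mem_right)
    then show ?thesis using p(1) by blast
  qed
  with r1 obtain q1 q2 where q1: "q1 \<in> right_side (a1,b1,c1,d1)" "q1 \<in> top_side (a2,b2,c2,d2)"
    and q2: "q2 \<in> right_side (a1,b1,c1,d1)" "q2 \<in> bottom_side (a2,b2,c2,d2)" by blast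
  have t: "a2 \<le> b1" "b1 \<le> b2" "c1 \<le> d2" "d2 \<le> d1"
    using q1 by (cases q1; auto simp: mem_right mem_top)+
  have bt: "c1 \<le> c2" "c2 \<le> d1"
    using q2 by (cases q2; auto simp: mem_right mem_bot)+
  have c1: "\<And>x y. (x,y) \<in> corners (a2,b2,c2,d2) \<Longrightarrow> (x,y) \<notin> frame (a1,b1,c1,d1)" using cor2 by blast
  have c0: "\<And>x y. (x,y) \<in> corners (a1,b1,c1,d1) \<Longrightarrow> (x,y) \<notin> frame (a2,b2,c2,d2)" using cor1 by blast
  have le: "\<And>x y. (x,y) \<in> left_side (a1,b1,c1,d1) \<Longrightarrow> (x,y) \<notin> frame (a2,b2,c2,d2)" using l1 by blast
  have "a2 \<noteq> b1" using c1[of a2 d2] t v2 by (auto simp: mem_corners mem_frame)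
  moreover have "b1 \<noteq> b2" using c1[of b2 d2] t v2 by (auto simp: mem_corners mem_frame)
  moreover have "c1 \<noteq> c2" using c0[of b1 c1] t bt v1 v2 by (auto simp: mem_corners mem_frame)
  moreover have "d1 \<noteq> d2" using c0[of b1 d1] t bt v1 v2 by (auto simp: mem_corners mem_frame)
  moreover have "a1 < a2"
  proof (rule ccontr)
    assume "\<not> a1 < a2"
    then have "(a1, d2) \<in> frame (a2,b2,c2,d2)" using t v1 by (auto simp: mem_frame)
    moreover have "(a1,d2) \<in> left_side (a1,b1,c1,d1)" using t by (auto simp: mem_left)
    ultimately show False using le by blast
  qed
  ultimately show ?thesis using t bt unfolding RR_def by auto
qed

lemma geo_edge:
  assumes v1: "a1 < b1" "c1 < d1" and v2: "a2 < b2" "c2 < d2"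
  and cor1: "corners (a1,b1,c1,d1) \<inter> frame (a2,b2,c2,d2) = {}"
  and cor2: "corners (a2,b2,c2,d2) \<inter> frame (a1,b1,c1,d1) = {}"
  and l1: "left_side (a1,b1,c1,d1) \<inter> frame (a2,b2,c2,d2) = {}"
  and l2: "left_side (a2,b2,c2,d2) \<inter> frame (a1,b1,c1,d1) = {}"
  and r1: "right_side (a1,b1,c1,d1) \<inter> frame (a2,b2,c2,d2) \<noteq> {} \<longrightarrow>
          right_side (a1,b1,c1,d1) \<inter> top_side (a2,b2,c2,d2) \<noteq> {} \<and> right_side (a1,b1,c1,d1) \<inter> bottom_side (a2,b2,c2,d2) \<noteq> {}"
  and r2: "right_side (a2,b2,c2,d2) \<inter> frame (a1,b1,c1,d1) \<noteq> {} \<longrightarrow>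
          right_side (a2,b2,c2,d2) \<inter> top_side (a1,b1,c1,d1) \<noteq> {} \<and> right_side (a2,b2,c2,d2) \<inter> bottom_side (a1,b1,c1,d1) \<noteq> {}"
  and int: "frame (a1,b1,c1,d1) \<inter> frame (a2,b2,c2,d2) \<noteq> {}"
  shows "RR a1 b1 c1 d1 a2 b2 c2 d2 \<or> RR a2 b2 c2 d2 a1 b1 c1 d1"
proof -
  obtain x y where p1: "(x,y) \<in> frame (a1,b1,c1,d1)" and p2: "(x,y) \<in> frame (a2,b2,c2,d2)"
    using int by auto
  have c1: "\<And>x y. (x,y) \<in> corners (a2,b2,c2,d2) \<Longrightarrow> (x,y) \<notin> frame (a1,b1,c1,d1)" using cor2 by blast
  have c0: "\<And>x y. (x,y) \<in> corners (a1,b1,c1,d1) \<Longrightarrow> (x,y) \<notin> frame (a2,b2,c2,d2)" using cor1 by blast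
  have le1: "\<And>x y. (x,y) \<in> left_side (a1,b1,c1,d1) \<Longrightarrow> (x,y) \<notin> frame (a2,b2,c2,d2)" using l1 by blast
  have le2: "\<And>x y. (x,y) \<in> left_side (a2,b2,c2,d2) \<Longrightarrow> (x,y) \<notin> frame (a1,b1,c1,d1)" using l2 by blast
  consider "x = b1 \<and> c1 \<le> y \<and> y \<le> d1" | "x = b2 \<and> c2 \<le> y \<and> y \<le> d2"
     | "x = a1 \<and> c1 \<le> y \<and> y \<le> d1" | "x = a2 \<and> c2 \<le> y \<and> y \<le> d2"
     | "a1 \<le> x \<and> x \<le> b1 \<and> (y = c1 \<or> y = d1) \<and> a2 \<le> x \<and> x \<le> b2 \<and> (y = c2 \<or> y = d2)"
    using p1 p2 unfolding mem_frame by blast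
  then show ?thesis
  proof cases
    case 1
    then show ?thesis using geo_edge_half[OF v1 v2 cor1 cor2 l1 r1, of y] p2 by auto
  next
    case 2
    then show ?thesis using geo_edge_half[OF v2 v1 cor2 cor1 l2 r2, of y] p1 by auto
  next
    case 3
    then show ?thesis using le1[of x y] p2 by (auto simp: mem_left)
  next
    case 4
    then show ?thesis using le2[of x y] p1 by (auto simp: mem_left)
  next
    case 5
    show ?thesis
    proof (cases "a2 \<le> a1")
      case True
      then have "(a1,y) \<in> corners (a1,b1,c1,d1)" "(a1,y) \<in> frame (a2,b2,c2,d2)"
        using 5 by (auto simp: mem_corners mem_frame)
      then show ?thesis using c0 by blast
    next
      case False
      then have "(a2,y) \<in> corners (a2,b2,c2,d2)" "(a2,y) \<in> frame (a1,b1,c1,d1)"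
        using 5 by (auto simp: mem_corners mem_frame)
      then show ?thesis using c1 by blast
    qed
  qed
qed

lemma geo_RR_int:
  assumes "RR a1 b1 c1 d1 a2 b2 c2 d2" "c2 < d2"
  shows "frame (a1,b1,c1,d1) \<inter> frame (a2,b2,c2,d2) \<noteq> {}"
proof -
  have "(b1,c2) \<in> frame (a1,b1,c1,d1)" "(b1,c2) \<in> frame (a2,b2,c2,d2)"
    using assms by (auto simp: RR_def mem_frame)
  then show ?thesis by blast
qed

definition INS :: "real \<Rightarrow> real \<Rightarrow> real \<Rightarrow> real \<Rightarrow> real \<Rightarrow> real \<Rightarrow> real \<Rightarrow> real \<Rightarrow> bool" where
  "INS a1 b1 c1 d1 a2 b2 c2 d2 \<longleftrightarrow> a2 < a1 \<and> b1 < b2 \<and> c2 < c1 \<and> d1 < d2"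

lemma geo_nonint:
  assumes v1: "a1 < b1" "c1 < d1" and v2: "a2 < b2" "c2 < d2"
  and dis: "frame (a1,b1,c1,d1) \<inter> frame (a2,b2,c2,d2) = {}"
  shows "b1 < a2 \<or> b2 < a1 \<or> d1 < c2 \<or> d2 < c1 \<or> INS a1 b1 c1 d1 a2 b2 c2 d2 \<or> INS a2 b2 c2 d2 a1 b1 c1 d1"
proof (rule ccontr)
  assume H: "\<not> ?thesis"
  have nf: "\<And>x y. (x,y) \<in> frame (a1,b1,c1,d1) \<Longrightarrow> (x,y) \<in> frame (a2,b2,c2,d2) \<Longrightarrow> False"
    using dis by blast
  have o: "a2 \<le> b1" "a1 \<le> b2" "c2 \<le> d1" "c1 \<le> d2" using H by auto
  have n1: "\<not> (a2 < a1 \<and> b1 < b2 \<and> c2 < c1 \<and> d1 < d2)" using H by (auto simp: INS_def)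
  have n2: "\<not> (a1 < a2 \<and> b2 < b1 \<and> c1 < c2 \<and> d2 < d1)" using H by (auto simp: INS_def)
  show False
    using nf[of a1 c2] nf[of a1 d2] nf[of b1 c2] nf[of b1 d2] nf[of a2 c1] nf[of a2 d1] nf[of b2 c1] nf[of b2 d1]
      o n1 n2 v1 v2 unfolding mem_frame by smt
qed

lemma geo_lens:
  assumes "RR a1 b1 c1 d1 a2 b2 c2 d2" "a3 < b3" "c3 < d3"
  and "a2 \<le> a3" "b3 \<le> b1" "c2 \<le> c3" "d3 \<le> d2"
  shows "frame (a3,b3,c3,d3) \<subseteq> region (a1,b1,c1,d1) \<inter> region (a2,b2,c2,d2)"
  using assms by (auto simp: RR_def frame_def region_def left_side_def right_side_def top_side_def bottom_side_def)

definition Rel :: "('a \<Rightarrow> real) \<Rightarrow> ('a \<Rightarrow> real) \<Rightarrow> ('a \<Rightarrow> real) \<Rightarrow> ('a \<Rightarrow> real) \<Rightarrow> 'a \<Rightarrow> 'a \<Rightarrow> bool" where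
  "Rel a b c d u v \<longleftrightarrow> a u < a v \<and> a v < b u \<and> b u < b v \<and> c u < c v \<and> d v < d u"

definition Ins :: "('a \<Rightarrow> real) \<Rightarrow> ('a \<Rightarrow> real) \<Rightarrow> ('a \<Rightarrow> real) \<Rightarrow> ('a \<Rightarrow> real) \<Rightarrow> 'a \<Rightarrow> 'a \<Rightarrow> bool" where
  "Ins a b c d v u \<longleftrightarrow> a u < a v \<and> b v < b u \<and> c u < c v \<and> d v < d u"

definition consec :: "'a list \<Rightarrow> 'a \<Rightarrow> 'a \<Rightarrow> bool" where
  "consec xs u v \<longleftrightarrow> (\<exists>i. Suc i < length xs \<and> {u, v} = {xs ! i, xs ! Suc i})"

lemma reach_closed:
  assumes "reach_in S E x y" "P x" "\<And>p q. p \<in> S \<Longrightarrow> q \<in> S \<Longrightarrow> E p q \<Longrightarrow> P p \<Longrightarrow> P q"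
  shows "P y"
  using assms(1,2) unfolding reach_in_def
  by (induction rule: rtranclp_induct) (use assms(3) in auto)

lemma reach_mono:
  assumes "reach_in S E x y" "S \<subseteq> T" shows "reach_in T E x y"
  using assms(1) unfolding reach_in_def
  by (induction rule: rtranclp_induct) (use assms(2) in \<open>auto intro: rtranclp.rtrancl_into_rtrancl\<close>)

lemma reach_step: "reach_in S E x y \<Longrightarrow> y \<in> S \<Longrightarrow> z \<in> S \<Longrightarrow> E y z \<Longrightarrow> reach_in S E x z"
  unfolding reach_in_def by (auto intro: rtranclp.rtrancl_into_rtrancl)

lemma reach_refl: "reach_in S E x x" unfolding reach_in_def by auto

lemma reach_trans: "reach_in S E x y \<Longrightarrow> reach_in S E y z \<Longrightarrow> reach_in S E x z"
  unfolding reach_in_def by auto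

lemma reach_sym:
  assumes "reach_in S E x y" "\<And>u v. E u v \<Longrightarrow> E v u" shows "reach_in S E y x"
  using assms(1) unfolding reach_in_def
proof (induction rule: rtranclp_induct)
  case base then show ?case by auto
next
  case (step y z)
  then have "(\<lambda>x y. x \<in> S \<and> y \<in> S \<and> E x y) z y" using assms(2) by auto
  then show ?case using step(3) by (auto intro: converse_rtranclp_into_rtranclp)
qed

lemma reach_first:
  assumes "reach_in S E x y" "x \<noteq> y" shows "\<exists>q\<in>S. E x q \<and> x \<in> S"
  using assms unfolding reach_in_def by (auto elim: converse_rtranclpE)

lemma consec_Nil[simp]: "\<not> consec [] u v" by (simp add: consec_def)

lemma consec_Cons: "consec (x # ys) u v \<longleftrightarrow> (ys \<noteq> [] \<and> {u, v} = {x, hd ys}) \<or> consec ys u v"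
proof
  assume "consec (x # ys) u v"
  then obtain i where i: "Suc i < length (x # ys)" "{u, v} = {(x#ys) ! i, (x#ys) ! Suc i}"
    unfolding consec_def by blast
  show "(ys \<noteq> [] \<and> {u, v} = {x, hd ys}) \<or> consec ys u v"
  proof (cases i)
    case 0 then show ?thesis using i by (cases ys) auto
  next
    case (Suc j) then show ?thesis using i unfolding consec_def by auto
  qed
next
  assume "(ys \<noteq> [] \<and> {u, v} = {x, hd ys}) \<or> consec ys u v"
  then show "consec (x # ys) u v"
  proof
    assume "ys \<noteq> [] \<and> {u, v} = {x, hd ys}"
    then show ?thesis unfolding consec_def
      by (intro exI[of _ 0]) (cases ys, auto)
  next
    assume "consec ys u v"
    then obtain i where "Suc i < length ys" "{u, v} = {ys ! i, ys ! Suc i}" unfolding consec_def by blast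
    then show ?thesis unfolding consec_def by (intro exI[of _ "Suc i"]) auto
  qed
qed

lemma consec_single[simp]: "\<not> consec [x] u v" by (simp add: consec_Cons)

lemma consec_append: "consec (xs @ ys) u v \<longleftrightarrow> consec xs u v \<or> consec ys u v \<or> (xs \<noteq> [] \<and> ys \<noteq> [] \<and> {u, v} = {last xs, hd ys})"
proof (induction xs)
  case Nil then show ?case by simp
next
  case (Cons x xs)
  show ?case
  proof (cases "xs = []")
    case True then show ?thesis by (auto simp: consec_Cons)
  next
    case False then show ?thesis using Cons by (auto simp: consec_Cons)
  qed
qed

lemma consec_rev: "consec (rev xs) u v \<longleftrightarrow> consec xs u v"
proof (induction xs)
  case Nil then show ?case by simp
next
  case (Cons x xs)
  show ?case using Cons by (auto simp: consec_append consec_Cons last_rev)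
qed

locale rfg =
  fixes V :: "'a set" and E :: "'a \<Rightarrow> 'a \<Rightarrow> bool" and a b c d :: "'a \<Rightarrow> real"
  assumes graph: "graph V E"
  and conn: "connected_in V E"
  and tf: "triangle_free V E"
  and nsc: "\<not> has_full_star_cutset V E"
  and valid: "\<And>u. u\<in>V \<Longrightarrow> a u < b u \<and> c u < d u"
  and edge_R: "\<And>u v. u\<in>V \<Longrightarrow> v\<in>V \<Longrightarrow> E u v \<Longrightarrow> Rel a b c d u v \<or> Rel a b c d v u"
  and R_edge: "\<And>u v. u\<in>V \<Longrightarrow> v\<in>V \<Longrightarrow> Rel a b c d u v \<Longrightarrow> E u v"
  and nonadj: "\<And>u v. u\<in>V \<Longrightarrow> v\<in>V \<Longrightarrow> u \<noteq> v \<Longrightarrow> \<not> E u v \<Longrightarrow>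
      b u < a v \<or> b v < a u \<or> d u < c v \<or> d v < c u \<or> Ins a b c d u v \<or> Ins a b c d v u"
  and lens: "\<And>u v w. u\<in>V \<Longrightarrow> v\<in>V \<Longrightarrow> w\<in>V \<Longrightarrow> Rel a b c d u v \<Longrightarrow>
      \<not> (a v \<le> a w \<and> b w \<le> b u \<and> c v \<le> c w \<and> d w \<le> d v)"
begin

abbreviation R where "R \<equiv> Rel a b c d"
abbreviation ins where "ins \<equiv> Ins a b c d"
abbreviation ylen where "ylen u \<equiv> d u - c u"
abbreviation N where "N h \<equiv> closed_nbhd V E h"

definition hollow where "hollow h \<longleftrightarrow> h \<in> V \<and> (\<exists>w\<in>V. ins w h)"

lemma finV: "finite V" using graph by (simp add: graph_def)

lemma E_V: "E u v \<Longrightarrow> u \<in> V \<and> v \<in> V \<and> u \<noteq> v"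
  using graph by (simp add: graph_def)

lemma E_sym: "E u v \<Longrightarrow> E v u"
  using graph by (simp add: graph_def)

lemma tri: "E x y \<Longrightarrow> E y z \<Longrightarrow> E x z \<Longrightarrow> False"
  using tf E_V unfolding triangle_free_def by blast

lemma E_R: "E u v \<Longrightarrow> R u v \<or> R v u" using edge_R E_V by blast

lemma R_E: "u \<in> V \<Longrightarrow> v \<in> V \<Longrightarrow> R u v \<Longrightarrow> E u v" using R_edge by blast

lemma R_ylen: "R u v \<Longrightarrow> ylen v < ylen u" by (auto simp: Rel_def)

lemma R_asym: "R u v \<Longrightarrow> \<not> R v u" by (auto simp: Rel_def)

lemma R_neq: "R u v \<Longrightarrow> u \<noteq> v" by (auto simp: Rel_def)

lemma ins_neq: "ins v u \<Longrightarrow> u \<noteq> v" by (auto simp: Ins_def)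

lemma ins_nE: "ins v u \<Longrightarrow> \<not> E u v"
  using E_R by (fastforce simp: Ins_def Rel_def)

lemma N_iff: "x \<in> V - N h \<longleftrightarrow> x \<in> V \<and> x \<noteq> h \<and> \<not> E h x"
  by (auto simp: closed_nbhd_def)

lemma nsc_conn: "h \<in> V \<Longrightarrow> u \<in> V - N h \<Longrightarrow> v \<in> V - N h \<Longrightarrow> reach_in (V - N h) E u v"
  using nsc unfolding has_full_star_cutset_def disconnected_in_def by blast

lemma conn_reach: "u \<in> V \<Longrightarrow> v \<in> V \<Longrightarrow> reach_in V E u v"
  using conn unfolding connected_in_def by blast

lemma geo_G1:
  assumes "ins y u" "R y z \<or> R z y" "c z < d z" "c y < d y" "c u < d u" "a z < b z" "a y < b y" "a u < b u"
    and "b u < a z \<or> b z < a u \<or> d u < c z \<or> d z < c u \<or> ins u z \<or> ins z u"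
  shows "ins z u"
  using assms unfolding Ins_def Rel_def by smt

lemma hollow_sep:
  assumes "hollow h" "z \<in> V" "z \<noteq> h" "\<not> E h z"
  shows "ins z h"
proof -
  obtain w where w: "w \<in> V" "ins w h" using assms(1) hollow_def by auto
  have hV: "h \<in> V" using assms(1) hollow_def by auto
  have wS: "w \<in> V - N h" using w ins_neq[OF w(2)] ins_nE[OF w(2)] by (intro N_iff[THEN iffD2]) simp
  have zS: "z \<in> V - N h" using assms by (intro N_iff[THEN iffD2]) simp
  have "reach_in (V - N h) E w z" using nsc_conn[OF hV wS zS] .
  then show ?thesis
  proof (rule reach_closed[where P="\<lambda>x. ins x h"])
    show "ins w h" by fact
  next
    fix p q assume pq: "p \<in> V - N h" "q \<in> V - N h" "E p q" "ins p h"
    then have "R p q \<or> R q p" using E_R by blast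
    moreover have "b h < a q \<or> b q < a h \<or> d h < c q \<or> d q < c h \<or> ins h q \<or> ins q h"
    proof -
      have "q \<in> V" "q \<noteq> h" "\<not> E h q" using N_iff pq(2) by blast+
      then show ?thesis using nonadj[of h q] hV by blast
    qed
    ultimately show "ins q h" using geo_G1[OF pq(4)] valid[of q] valid[of p] valid[OF hV] pq(1,2) by (meson DiffD1)
  qed
qed

lemma hollow_adj:
  assumes "hollow h1" "hollow h2" "h1 \<noteq> h2" shows "E h1 h2"
proof (rule ccontr)
  assume "\<not> E h1 h2"
  then have "ins h2 h1" "ins h1 h2" using hollow_sep assms E_sym hollow_def by metis+
  then show False by (auto simp: Ins_def)
qed

lemma parents_nested:
  assumes "R p1 v" "R p2 v" "p1 \<noteq> p2" "p1 \<in> V" "p2 \<in> V" "v \<in> V"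
  shows "ins p1 p2 \<or> ins p2 p1"
proof -
  have "\<not> E p1 p2" using tri[of p1 v p2] R_E assms E_sym by blast
  then have "b p1 < a p2 \<or> b p2 < a p1 \<or> d p1 < c p2 \<or> d p2 < c p1 \<or> ins p1 p2 \<or> ins p2 p1"
    using nonadj assms by blast
  then show ?thesis using assms(1,2) valid[OF assms(6)] unfolding Rel_def Ins_def by smt
qed

lemma parents_hollow:
  assumes "R p1 v" "R p2 v" "p1 \<noteq> p2" "p1 \<in> V" "p2 \<in> V" "v \<in> V"
  shows "hollow p1 \<or> hollow p2"
  using parents_nested[OF assms] assms unfolding hollow_def by blast

lemma cycle_parents:
  assumes "has_cycle_in S E" "S \<subseteq> V"
  shows "\<exists>p1\<in>S. \<exists>p2\<in>S. \<exists>v\<in>S. p1 \<noteq> p2 \<and> R p1 v \<and> R p2 v"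
proof -
  obtain cs where cs: "length cs \<ge> 3" "distinct cs" "set cs \<subseteq> S"
    "\<forall>i. Suc i < length cs \<longrightarrow> E (cs ! i) (cs ! Suc i)" "E (last cs) (hd cs)"
    using assms(1) unfolding has_cycle_in_def by blast
  define n where "n = length cs"
  have n3: "n \<ge> 3" using cs n_def by simp
  have inS: "\<And>j. j < n \<Longrightarrow> cs ! j \<in> S" using cs(3) n_def by auto
  have fin: "finite ((\<lambda>j. ylen (cs ! j)) ` {..<n})" by simp
  have ne: "(\<lambda>j. ylen (cs ! j)) ` {..<n} \<noteq> {}" using n3 by (simp add: lessThan_empty_iff)
  obtain i where i: "i < n" "ylen (cs ! i) = Min ((\<lambda>j. ylen (cs ! j)) ` {..<n})"
    using Min_in[OF fin ne] by auto
  have imin: "\<And>j. j < n \<Longrightarrow> ylen (cs ! i) \<le> ylen (cs ! j)"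
    using i(2) Min_le[OF fin] by auto
  have par: "R (cs ! j) (cs ! i)" if "j < n" "E (cs ! j) (cs ! i)" for j
  proof -
    have "R (cs ! j) (cs ! i) \<or> R (cs ! i) (cs ! j)" using E_R that(2) by blast
    moreover have "\<not> R (cs ! i) (cs ! j)" using R_ylen imin[OF that(1)] by fastforce
    ultimately show ?thesis by blast
  qed
  have csne: "cs \<noteq> []" using n3 n_def by auto
  have lastE: "last cs = cs ! (n - 1)" "hd cs = cs ! 0" using csne n_def
    by (simp_all add: last_conv_nth hd_conv_nth)
  have dist: "\<And>j k. j < n \<Longrightarrow> k < n \<Longrightarrow> j \<noteq> k \<Longrightarrow> cs ! j \<noteq> cs ! k"
    using cs(2) n_def by (simp add: nth_eq_iff_index_eq)
  obtain j k where jk: "j < n" "k < n" "j \<noteq> k" "E (cs ! j) (cs ! i)" "E (cs ! k) (cs ! i)"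
  proof (cases "i = 0")
    case True
    have "E (cs ! (n-1)) (cs ! i)" using cs(5) lastE True by simp
    moreover have "E (cs ! 1) (cs ! i)" using cs(4)[rule_format, of 0] n3 n_def True E_sym by simp
    ultimately show ?thesis using that[of "n-1" 1] n3 by simp
  next
    case False
    show ?thesis
    proof (cases "i = n - 1")
      case True
      have "E (cs ! 0) (cs ! i)" using cs(5) lastE True E_sym by simp
      moreover have "E (cs ! (i-1)) (cs ! i)"
      proof -
        have si: "Suc (i-1) = i" using False by simp
        show ?thesis using cs(4)[rule_format, of "i-1"] i(1) n_def si by simp
      qed
      ultimately show ?thesis using that[of 0 "i-1"] n3 True False by simp
    next
      case F2: False
      have "E (cs ! (i+1)) (cs ! i)" using cs(4)[rule_format, of i] n_def i(1) F2 E_sym by simp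
      moreover have "E (cs ! (i-1)) (cs ! i)"
      proof -
        have si: "Suc (i-1) = i" using False by simp
        show ?thesis using cs(4)[rule_format, of "i-1"] i(1) n_def si by simp
      qed
      ultimately show ?thesis using that[of "i+1" "i-1"] i(1) F2 False by simp
    qed
  qed
  show ?thesis
    using par[OF jk(1,4)] par[OF jk(2,5)] dist[OF jk(1-3)] inS jk(1,2) i(1) by blast
qed

lemma cycle_hollow:
  assumes "has_cycle_in S E" "S \<subseteq> V"
  shows "\<exists>h\<in>S. hollow h"
proof -
  obtain p1 p2 v where "p1 \<in> S" "p2 \<in> S" "v \<in> S" "p1 \<noteq> p2" "R p1 v" "R p2 v"
    using cycle_parents[OF assms] by blast
  then show ?thesis using parents_hollow[of p1 v p2] assms(2) by blast
qed

definition UP where "UP T \<longleftrightarrow> (\<forall>v p1 p2. v \<in> V \<longrightarrow> p1 \<in> T \<longrightarrow> p2 \<in> T \<longrightarrow> R p1 v \<longrightarrow> R p2 v \<longrightarrow> p1 = p2)"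

definition Dset where "Dset T y = {z. (\<lambda>p q. p \<in> T \<and> q \<in> T \<and> R p q)\<^sup>*\<^sup>* y z}"

lemma D_self: "y \<in> Dset T y" by (simp add: Dset_def)

lemma D_ylen: "z \<in> Dset T y \<Longrightarrow> ylen z \<le> ylen y"
  unfolding Dset_def mem_Collect_eq
  by (induction rule: rtranclp_induct) (auto dest: R_ylen)

lemma D_in: "z \<in> Dset T y \<Longrightarrow> y \<in> T \<Longrightarrow> z \<in> T"
  unfolding Dset_def mem_Collect_eq
  by (induction rule: rtranclp_induct) auto

lemma D_step: "p \<in> Dset T y \<Longrightarrow> p \<in> T \<Longrightarrow> q \<in> T \<Longrightarrow> R p q \<Longrightarrow> q \<in> Dset T y"
  unfolding Dset_def by (auto intro: rtranclp.rtrancl_into_rtrancl)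

lemma D_parent: "z \<in> Dset T y \<Longrightarrow> z \<noteq> y \<Longrightarrow> \<exists>p \<in> Dset T y. p \<in> T \<and> z \<in> T \<and> R p z"
  unfolding Dset_def mem_Collect_eq by (erule rtranclp.cases) auto

lemma D_first: "z \<in> Dset T y \<Longrightarrow> z \<noteq> y \<Longrightarrow> \<exists>q. y \<in> T \<and> q \<in> T \<and> R y q \<and> z \<in> Dset T q"
  unfolding Dset_def mem_Collect_eq by (erule converse_rtranclpE) auto

lemma D_exit:
  assumes "UP T" "T \<subseteq> V" "y \<in> T" "p \<in> Dset T y" "q \<in> T" "E p q" "q \<notin> Dset T y"
  shows "p = y \<and> R q y"
proof -
  have pT: "p \<in> T" using D_in assms by blast
  have "R p q \<or> R q p" using E_R assms(6) by blast
  moreover have "\<not> R p q" using D_step[OF assms(4) pT assms(5)] assms(7) by blast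
  ultimately have Rqp: "R q p" by blast
  show ?thesis
  proof (cases "p = y")
    case True then show ?thesis using Rqp by simp
  next
    case False
    then obtain p' where p': "p' \<in> Dset T y" "p' \<in> T" "R p' p" using D_parent[OF assms(4)] by blast
    have "p' = q" using assms(1) p' Rqp assms(5) pT assms(2) unfolding UP_def by blast
    then show ?thesis using p'(1) assms(7) by blast
  qed
qed

lemma SEP:
  assumes "UP T" "T \<subseteq> V" "x \<in> T" "r \<noteq> s" "R x r" "R x s" "r \<in> T" "s \<in> T"
    "S \<subseteq> T" "x \<notin> S" "r \<in> S" "s \<in> S"
  shows "\<not> reach_in S E r s"
proof
  assume re: "reach_in S E r s"
  have "s \<in> Dset T r"
  proof (rule reach_closed[OF re, where P="\<lambda>z. z \<in> Dset T r"])
    show "r \<in> Dset T r" by (rule D_self)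
  next
    fix p q assume pq: "p \<in> S" "q \<in> S" "E p q" "p \<in> Dset T r"
    show "q \<in> Dset T r"
    proof (rule ccontr)
      assume "q \<notin> Dset T r"
      then have "p = r \<and> R q r" using D_exit[OF assms(1,2,7) pq(4) _ pq(3)] pq(2) assms(9) by blast
      then have "q = x" using assms(1,2,3,5,7,9) pq(2) unfolding UP_def by blast
      then show False using pq(2) assms(10) by blast
    qed
  qed
  moreover have "x \<notin> Dset T r" using D_ylen R_ylen[OF assms(5)] by fastforce
  moreover have "E s x" using R_E assms E_sym by blast
  ultimately have "s = r" using D_exit[OF assms(1,2,7) _ assms(3)] by blast
  then show False using assms(4) by simp
qed

lemma chain:
  assumes UPV: "UP V"
  shows "x \<in> V \<Longrightarrow> (\<forall>z\<in>Dset V x. \<forall>y1 y2. y1 \<in> V \<longrightarrow> y2 \<in> V \<longrightarrow> R z y1 \<longrightarrow> R z y2 \<longrightarrow> y1 = y2) \<Longrightarrow>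
    \<exists>xs. xs \<noteq> [] \<and> hd xs = x \<and> distinct xs \<and> set xs = Dset V x \<and>
       (\<forall>u v. consec xs u v \<longleftrightarrow> E u v \<and> u \<in> Dset V x \<and> v \<in> Dset V x)"
proof (induction "card (Dset V x)" arbitrary: x rule: less_induct)
  case less
  note xV = less.prems(1) and uc = less.prems(2)
  have DsubV: "\<And>y. y \<in> V \<Longrightarrow> Dset V y \<subseteq> V" using D_in by blast
  show ?case
  proof (cases "\<exists>y\<in>V. R x y")
    case False
    have Dx: "Dset V x = {x}"
    proof
      show "Dset V x \<subseteq> {x}" using D_first False by blast
    qed (simp add: D_self)
    show ?thesis using Dx E_V by (intro exI[of _ "[x]"]) auto
  next
    case True
    then obtain y where y: "y \<in> V" "R x y" by blast
    have yuniq: "\<And>y'. y' \<in> V \<Longrightarrow> R x y' \<Longrightarrow> y' = y" using uc D_self y by blast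
    have Dy_sub: "Dset V y \<subseteq> Dset V x"
    proof
      fix z assume "z \<in> Dset V y"
      then show "z \<in> Dset V x" unfolding Dset_def mem_Collect_eq
        using y xV by (auto intro: converse_rtranclp_into_rtranclp)
    qed
    have Dx: "Dset V x = insert x (Dset V y)"
    proof
      show "Dset V x \<subseteq> insert x (Dset V y)"
      proof
        fix z assume z: "z \<in> Dset V x"
        show "z \<in> insert x (Dset V y)"
        proof (cases "z = x")
          case False
          then obtain q where "q \<in> V" "R x q" "z \<in> Dset V q" using D_first[OF z] by blast
          then show ?thesis using yuniq by blast
        qed simp
      qed
    next
      show "insert x (Dset V y) \<subseteq> Dset V x" using Dy_sub D_self by blast
    qed
    have xnD: "x \<notin> Dset V y" using D_ylen R_ylen[OF y(2)] by fastforce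
    have finD: "finite (Dset V x)" using DsubV[OF xV] finV finite_subset by blast
    have "card (Dset V y) < card (Dset V x)"
      using Dx xnD finD by (simp add: card_insert_if)
    moreover have "\<forall>z\<in>Dset V y. \<forall>y1 y2. y1 \<in> V \<longrightarrow> y2 \<in> V \<longrightarrow> R z y1 \<longrightarrow> R z y2 \<longrightarrow> y1 = y2"
      using uc Dy_sub by blast
    ultimately obtain ys where ys: "ys \<noteq> []" "hd ys = y" "distinct ys" "set ys = Dset V y"
      "\<forall>u v. consec ys u v \<longleftrightarrow> E u v \<and> u \<in> Dset V y \<and> v \<in> Dset V y"
      using less.hyps y(1) by blast
    have Exy: "E x y" using R_E xV y by blast
    have key: "\<And>v. v \<in> Dset V y \<Longrightarrow> E x v \<Longrightarrow> v = y"
    proof -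
      fix v assume v: "v \<in> Dset V y" "E x v"
      have vV: "v \<in> V" using E_V v(2) by blast
      have "R x v \<or> R v x" using E_R v(2) by blast
      moreover have "\<not> R v x"
      proof
        assume "R v x"
        then show False using D_ylen[OF v(1)] R_ylen[OF y(2)] R_ylen[of v x] by linarith
      qed
      ultimately show "v = y" using yuniq vV by blast
    qed
    show ?thesis
    proof (intro exI[of _ "x # ys"] conjI allI)
      show "distinct (x # ys)" using ys xnD by simp
      show "set (x # ys) = Dset V x" using ys Dx by simp
      fix u v
      show "consec (x # ys) u v \<longleftrightarrow> E u v \<and> u \<in> Dset V x \<and> v \<in> Dset V x"
      proof
        assume "consec (x # ys) u v"
        then have "{u, v} = {x, y} \<or> consec ys u v" using ys(1,2) by (simp add: consec_Cons)
        then show "E u v \<and> u \<in> Dset V x \<and> v \<in> Dset V x"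
          using ys(5) Exy E_sym Dx D_self by (auto simp: doubleton_eq_iff)
      next
        assume H: "E u v \<and> u \<in> Dset V x \<and> v \<in> Dset V x"
        have "{u, v} = {x, y} \<or> consec ys u v"
        proof (cases "u = x")
          case True
          then have "v \<noteq> x" using H E_V by blast
          then have "v \<in> Dset V y" using H Dx by blast
          then have "v = y" using key H True by blast
          then show ?thesis using True by simp
        next
          case False
          then have uD: "u \<in> Dset V y" using H Dx by blast
          show ?thesis
          proof (cases "v = x")
            case True
            then have "u = y" using key uD H E_sym by blast
            then show ?thesis using True by auto
          next
            case False
            then show ?thesis using H Dx uD ys(5) by blast
          qed
        qed
        then show "consec (x # ys) u v" using ys(1,2) by (simp add: consec_Cons)
      qed
    qed simp_all
  qed
qed

end

lemma graph_sym: "graph V E \<Longrightarrow> E u v \<Longrightarrow> E v u" by (simp add: graph_def)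
lemma graph_in: "graph V E \<Longrightarrow> E u v \<Longrightarrow> u \<in> V \<and> v \<in> V \<and> u \<noteq> v" by (simp add: graph_def)

lemma path3:
  assumes g: "graph V E" and d: "distinct [p0, p1, p2]" and V: "V = {p0, p1, p2}"
    and e: "E p0 p1" "E p1 p2" "\<not> E p0 p2"
  shows "is_path_graph V E"
  unfolding is_path_graph_def
proof (intro exI[of _ "[p0,p1,p2]"] conjI allI)
  fix u v
  have c: "(\<exists>i. Suc i < length [p0, p1, p2] \<and> {u, v} = {[p0, p1, p2] ! i, [p0, p1, p2] ! Suc i})
     \<longleftrightarrow> {u,v} = {p0,p1} \<or> {u,v} = {p1,p2}"
    using consec_Cons[of p0 "[p1,p2]" u v] consec_Cons[of p1 "[p2]" u v] unfolding consec_def by simp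
  have es: "E p1 p0" "E p2 p1" "\<not> E p2 p0" using e graph_sym[OF g] by blast+
  have "E u v \<longleftrightarrow> {u,v} = {p0,p1} \<or> {u,v} = {p1,p2}"
  proof
    assume "E u v"
    then have "u \<in> V" "v \<in> V" "u \<noteq> v" using graph_in[OF g] by blast+
    then show "{u,v} = {p0,p1} \<or> {u,v} = {p1,p2}" using V \<open>E u v\<close> e es by auto
  next
    assume "{u,v} = {p0,p1} \<or> {u,v} = {p1,p2}"
    then show "E u v" using e es by (auto simp: doubleton_eq_iff)
  qed
  then show "E u v \<longleftrightarrow> (\<exists>i. Suc i < length [p0, p1, p2] \<and> {u, v} = {[p0, p1, p2] ! i, [p0, p1, p2] ! Suc i})"
    using c by simp
qed (use d V in auto)

lemma path4:
  assumes g: "graph V E" and d: "distinct [p0, p1, p2, p3]" and V: "V = {p0, p1, p2, p3}"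
    and e: "E p0 p1" "E p1 p2" "E p2 p3" "\<not> E p0 p2" "\<not> E p0 p3" "\<not> E p1 p3"
  shows "is_path_graph V E"
  unfolding is_path_graph_def
proof (intro exI[of _ "[p0,p1,p2,p3]"] conjI allI)
  fix u v
  have c: "(\<exists>i. Suc i < length [p0, p1, p2, p3] \<and> {u, v} = {[p0, p1, p2, p3] ! i, [p0, p1, p2, p3] ! Suc i})
     \<longleftrightarrow> {u,v} = {p0,p1} \<or> {u,v} = {p1,p2} \<or> {u,v} = {p2,p3}"
    using consec_Cons[of p0 "[p1,p2,p3]" u v] consec_Cons[of p1 "[p2,p3]" u v] consec_Cons[of p2 "[p3]" u v]
    unfolding consec_def by simp
  have es: "E p1 p0" "E p2 p1" "E p3 p2" "\<not> E p2 p0" "\<not> E p3 p0" "\<not> E p3 p1" using e graph_sym[OF g] by blast+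
  have "E u v \<longleftrightarrow> {u,v} = {p0,p1} \<or> {u,v} = {p1,p2} \<or> {u,v} = {p2,p3}"
  proof
    assume "E u v"
    then have "u \<in> V" "v \<in> V" "u \<noteq> v" using graph_in[OF g] by blast+
    then show "{u,v} = {p0,p1} \<or> {u,v} = {p1,p2} \<or> {u,v} = {p2,p3}" using V \<open>E u v\<close> e es by auto
  next
    assume "{u,v} = {p0,p1} \<or> {u,v} = {p1,p2} \<or> {u,v} = {p2,p3}"
    then show "E u v" using e es by (auto simp: doubleton_eq_iff)
  qed
  then show "E u v \<longleftrightarrow> (\<exists>i. Suc i < length [p0, p1, p2, p3] \<and> {u, v} = {[p0, p1, p2, p3] ! i, [p0, p1, p2, p3] ! Suc i})"
    using c by simp
qed (use d V in auto)

lemma connected_center: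
  assumes "w0 \<in> S" "\<And>u. u \<in> S \<Longrightarrow> reach_in S E w0 u" "\<And>u v. E u v \<Longrightarrow> E v u"
  shows "connected_in S E"
  unfolding connected_in_def
proof (intro conjI ballI)
  show "S \<noteq> {}" using assms(1) by blast
  fix u v assume "u \<in> S" "v \<in> S"
  have "reach_in S E u w0" by (rule reach_sym[OF assms(2)[OF \<open>u \<in> S\<close>] assms(3)])
  then show "reach_in S E u v" by (rule reach_trans[OF _ assms(2)[OF \<open>v \<in> S\<close>]])
qed

lemma small_cycle:
  assumes g: "graph V E" and tf: "triangle_free V E" and S: "S \<subseteq> V" "finite S" "card S \<le> 3"
  shows "\<not> has_cycle_in S E"
proof
  assume "has_cycle_in S E"
  then obtain cs where cs: "length cs \<ge> 3" "distinct cs" "set cs \<subseteq> S"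
    "\<forall>i. Suc i < length cs \<longrightarrow> E (cs ! i) (cs ! Suc i)" "E (last cs) (hd cs)"
    unfolding has_cycle_in_def by blast
  have "length cs = card (set cs)" using cs(2) by (simp add: distinct_card)
  also have "\<dots> \<le> card S" using cs(3) S(2) card_mono by blast
  finally have l3: "length cs = 3" using cs(1) S(3) by simp
  then obtain p q r where pqr: "cs = [p,q,r]"
    by (auto simp: numeral_3_eq_3 length_Suc_conv)
  have "E p q" "E q r" "E r p" using cs(4,5) pqr by auto
  moreover have "p \<in> V" "q \<in> V" "r \<in> V" using cs(3) pqr S(1) by auto
  ultimately show False using tf graph_sym[OF g] unfolding triangle_free_def by blast
qed

context rfg begin

lemma path_of_list:
  assumes "distinct xs" "set xs = V" "\<And>u v. E u v \<longleftrightarrow> consec xs u v"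
  shows "is_path_graph V E"
  unfolding is_path_graph_def using assms unfolding consec_def by blast

lemma no_hollow_path:
  assumes noh: "\<forall>h. \<not> hollow h"
  shows "is_path_graph V E"
proof -
  have UPV: "UP V" unfolding UP_def using parents_hollow noh by blast
  have deg1: False if "p \<in> V" "v \<in> V" "r \<in> V" "s \<in> V" "R p v" "R v r" "R v s" "r \<noteq> s" for p v r s
  proof -
    have pv: "E p v" using R_E that by blast
    have rS: "r \<in> V - N p"
    proof (rule N_iff[THEN iffD2], intro conjI)
      show "r \<noteq> p" using that(5,6) by (auto simp: Rel_def)
      show "\<not> E p r" using tri[of p v r] pv R_E that by blast
    qed fact
    have sS: "s \<in> V - N p"
    proof (rule N_iff[THEN iffD2], intro conjI)
      show "s \<noteq> p" using that(5,7) by (auto simp: Rel_def)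
      show "\<not> E p s" using tri[of p v s] pv R_E that by blast
    qed fact
    have vS: "v \<notin> V - N p" using pv N_iff by blast
    show False using SEP[OF UPV _ that(2) that(8,6,7,3,4) _ vS rS sS] nsc_conn[OF that(1) rS sS] by blast
  qed
  have deg2: False if "v \<in> V" "r \<in> V" "s \<in> V" "t \<in> V" "R v r" "R v s" "R v t" "r \<noteq> s" "r \<noteq> t" "s \<noteq> t" for v r s t
  proof -
    have tv: "E t v" using R_E that E_sym by blast
    have rS: "r \<in> V - N t"
    proof (rule N_iff[THEN iffD2], intro conjI)
      show "\<not> E t r" using tri[of t v r] tv R_E that by blast
    qed (use that in auto)
    have sS: "s \<in> V - N t"
    proof (rule N_iff[THEN iffD2], intro conjI)
      show "\<not> E t s" using tri[of t v s] tv R_E that by blast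
    qed (use that in auto)
    have vS: "v \<notin> V - N t" using tv E_sym N_iff by blast
    show False using SEP[OF UPV _ that(1) that(8,5,6,2,3) _ vS rS sS] nsc_conn[OF that(4) rS sS] by blast
  qed
  have Vne: "V \<noteq> {}" using conn connected_in_def by blast
  have "Max (ylen ` V) \<in> ylen ` V" using Max_in[of "ylen ` V"] finV Vne by auto
  then obtain r where r: "r \<in> V" "ylen r = Max (ylen ` V)" by auto
  have root: "\<And>p. p \<in> V \<Longrightarrow> \<not> R p r"
  proof
    fix p assume "p \<in> V" "R p r"
    then have "ylen p \<le> ylen r" using r(2) Max_ge finV by auto
    then show False using R_ylen[OF \<open>R p r\<close>] by linarith
  qed
  have allD: "z \<in> Dset V r" if "z \<in> V" for z
  proof (rule reach_closed[OF conn_reach[OF r(1) that], where P="\<lambda>z. z \<in> Dset V r"])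
    show "r \<in> Dset V r" by (rule D_self)
  next
    fix p q assume pq: "p \<in> V" "q \<in> V" "E p q" "p \<in> Dset V r"
    show "q \<in> Dset V r"
    proof (rule ccontr)
      assume "q \<notin> Dset V r"
      then have "R q r" using D_exit[OF UPV _ r(1) pq(4) pq(2,3)] by blast
      then show False using root pq(2) by blast
    qed
  qed
  have DV: "Dset V r = V" using allD D_in r(1) by blast
  have hasp: "\<exists>p\<in>V. R p z" if "z \<in> V" "z \<noteq> r" for z
    using D_parent[OF allD[OF that(1)] that(2)] by blast
  have uc: "\<forall>y1 y2. y1 \<in> V \<longrightarrow> y2 \<in> V \<longrightarrow> R z y1 \<longrightarrow> R z y2 \<longrightarrow> y1 = y2" if "z \<in> V" "z \<noteq> r" for z
    using hasp[OF that] deg1 that(1) by blast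
  show ?thesis
  proof (cases "\<exists>y1\<in>V. \<exists>y2\<in>V. y1 \<noteq> y2 \<and> R r y1 \<and> R r y2")
    case False
    have "\<forall>z\<in>Dset V r. \<forall>y1 y2. y1 \<in> V \<longrightarrow> y2 \<in> V \<longrightarrow> R z y1 \<longrightarrow> R z y2 \<longrightarrow> y1 = y2"
      using False uc DV by blast
    then obtain xs where xs: "distinct xs" "set xs = Dset V r"
      "\<forall>u v. consec xs u v \<longleftrightarrow> E u v \<and> u \<in> Dset V r \<and> v \<in> Dset V r"
      using chain[OF UPV r(1)] by blast
    show ?thesis using xs DV E_V by (intro path_of_list[of xs]) auto
  next
    case True
    then obtain y1 y2 where y: "y1 \<in> V" "y2 \<in> V" "y1 \<noteq> y2" "R r y1" "R r y2" by blast
    have ch: "\<And>y. y \<in> V \<Longrightarrow> R r y \<Longrightarrow> y = y1 \<or> y = y2" using deg2 y r(1) by blast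
    have ucy: "\<forall>z\<in>Dset V y. \<forall>y1 y2. y1 \<in> V \<longrightarrow> y2 \<in> V \<longrightarrow> R z y1 \<longrightarrow> R z y2 \<longrightarrow> y1 = y2"
      if "y \<in> V" "R r y" for y
    proof
      fix z assume z: "z \<in> Dset V y"
      have "z \<in> V" using D_in z that(1) by blast
      moreover have "z \<noteq> r" using D_ylen[OF z] R_ylen[OF that(2)] by fastforce
      ultimately show "\<forall>y1 y2. y1 \<in> V \<longrightarrow> y2 \<in> V \<longrightarrow> R z y1 \<longrightarrow> R z y2 \<longrightarrow> y1 = y2" using uc by blast
    qed
    obtain c1 where c1: "c1 \<noteq> []" "hd c1 = y1" "distinct c1" "set c1 = Dset V y1"
      "\<forall>u v. consec c1 u v \<longleftrightarrow> E u v \<and> u \<in> Dset V y1 \<and> v \<in> Dset V y1"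
      using chain[OF UPV y(1) ucy[OF y(1,4)]] by blast
    obtain c2 where c2: "c2 \<noteq> []" "hd c2 = y2" "distinct c2" "set c2 = Dset V y2"
      "\<forall>u v. consec c2 u v \<longleftrightarrow> E u v \<and> u \<in> Dset V y2 \<and> v \<in> Dset V y2"
      using chain[OF UPV y(2) ucy[OF y(2,5)]] by blast
    have rn1: "r \<notin> Dset V y1" using D_ylen R_ylen[OF y(4)] by fastforce
    have rn2: "r \<notin> Dset V y2" using D_ylen R_ylen[OF y(5)] by fastforce
    have y2n: "y2 \<notin> Dset V y1"
    proof
      assume "y2 \<in> Dset V y1"
      then have "y2 = y1" using D_exit[OF UPV _ y(1) _ r(1) _ rn1] R_E y r(1) E_sym by blast
      then show False using y(3) by simp
    qed
    have disj: "z \<notin> Dset V y1" if "z \<in> Dset V y2" for z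
      using that unfolding Dset_def[of V y2] mem_Collect_eq
    proof (induction rule: rtranclp_induct)
      case base then show ?case using y2n by simp
    next
      case (step z z')
      show ?case
      proof
        assume z'D: "z' \<in> Dset V y1"
        have "z' = y1 \<and> R z y1" using D_exit[OF UPV _ y(1) z'D _ _ step.IH] step.hyps(2) R_E E_sym by blast
        then have "z = r" using UPV r(1) y(1,4) step.hyps(2) unfolding UP_def by blast
        moreover have "z \<in> Dset V y2" using step.hyps(1) unfolding Dset_def by simp
        ultimately show False using rn2 by simp
      qed
    qed
    have Vsplit: "V = insert r (Dset V y1 \<union> Dset V y2)"
    proof
      show "V \<subseteq> insert r (Dset V y1 \<union> Dset V y2)"
      proof
        fix z assume zV: "z \<in> V"
        show "z \<in> insert r (Dset V y1 \<union> Dset V y2)"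
        proof (cases "z = r")
          case False
          then obtain q where "q \<in> V" "R r q" "z \<in> Dset V q" using D_first[OF allD[OF zV]] by blast
          then show ?thesis using ch by blast
        qed simp
      qed
    next
      show "insert r (Dset V y1 \<union> Dset V y2) \<subseteq> V" using D_in y r(1) by blast
    qed
    define xs where "xs = rev c1 @ r # c2"
    have dis12: "set c1 \<inter> set c2 = {}" using c1(4) c2(4) disj by blast
    show ?thesis
    proof (rule path_of_list[of xs])
      show "distinct xs" unfolding xs_def using c1(3,4) c2(3,4) rn1 rn2 dis12 by simp
      show "set xs = V" unfolding xs_def using c1(4) c2(4) Vsplit by simp
      fix u v
      have lr: "last (rev c1) = y1" using c1(1,2) by (simp add: last_rev)
      have cx: "consec xs u v \<longleftrightarrow> consec c1 u v \<or> ({u, v} = {r, y2} \<or> consec c2 u v) \<or> {u, v} = {y1, r}"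
        unfolding xs_def consec_append consec_rev consec_Cons using c1(1) c2(1,2) lr by simp
      show "E u v \<longleftrightarrow> consec xs u v"
      proof
        assume Euv: "E u v"
        have uV: "u \<in> V" "v \<in> V" "u \<noteq> v" using E_V Euv by blast+
        show "consec xs u v"
        proof (cases "u = r")
          case True
          then have "R r v" using E_R Euv root uV by blast
          then have "v = y1 \<or> v = y2" using ch uV by blast
          then show ?thesis using cx True by (auto simp: insert_commute)
        next
          case ur: False
          show ?thesis
          proof (cases "v = r")
            case True
            then have "R r u" using E_R Euv root uV by blast
            then have "u = y1 \<or> u = y2" using ch uV by blast
            then show ?thesis using cx True by (auto simp: insert_commute)
          next
            case vr: False
            have cross: False if "p \<in> Dset V y1" "q \<in> Dset V y2" "E p q" for p q
            proof -
              have qV: "q \<in> V" using E_V that(3) by blast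
              have "p = y1 \<and> R q y1" using D_exit[OF UPV _ y(1) that(1) qV that(3) disj[OF that(2)]] by blast
              then have "q = r" using UPV r(1) y(1,4) qV unfolding UP_def by blast
              then show False using that(2) rn2 by simp
            qed
            have uu: "u \<in> Dset V y1 \<or> u \<in> Dset V y2" "v \<in> Dset V y1 \<or> v \<in> Dset V y2"
              using uV Vsplit ur vr by blast+
            have "(u \<in> Dset V y1 \<and> v \<in> Dset V y1) \<or> (u \<in> Dset V y2 \<and> v \<in> Dset V y2)"
              using uu cross[of u v] cross[of v u] Euv E_sym by blast
            then have "consec c1 u v \<or> consec c2 u v" using c1(5) c2(5) Euv by blast
            then show ?thesis using cx by blast
          qed
        qed
      next
        assume "consec xs u v"
        then have "consec c1 u v \<or> {u, v} = {r, y2} \<or> consec c2 u v \<or> {u, v} = {y1, r}" using cx by blast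
        moreover have "E r y2" "E r y1" using R_E y r(1) by blast+
        ultimately show "E u v" using c1(5) c2(5) E_sym by (auto simp: doubleton_eq_iff)
      qed
    qed
  qed
qed

end

context rfg begin

lemma two_hollow:
  assumes hh: "hollow h" and hh2: "hollow h2" and Rhh2: "R h h2"
  shows "is_path_graph V E \<or> is_chandelier V E"
proof -
  have hV: "h \<in> V" and h2V: "h2 \<in> V" using hh hh2 hollow_def by auto
  have Ehh2: "E h h2" using R_E hV h2V Rhh2 by blast
  have cover: "E h z \<or> E h2 z" if "z \<in> V" "z \<noteq> h" "z \<noteq> h2" for z
  proof (rule ccontr)
    assume "\<not> (E h z \<or> E h2 z)"
    then have "ins z h" "ins z h2" using hollow_sep hh hh2 that by blast+
    then show False using lens[OF hV h2V that(1) Rhh2] by (auto simp: Ins_def)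
  qed
  obtain y where y: "y \<in> V" "ins y h" using hh hollow_def by blast
  obtain x where x: "x \<in> V" "ins x h2" using hh2 hollow_def by blast
  have nhy: "\<not> E h y" using ins_nE y(2) by blast
  have yh: "y \<noteq> h" using ins_neq y(2) by blast
  have yh2: "y \<noteq> h2" using nhy Ehh2 by blast
  have Eh2y: "E h2 y" using cover y(1) yh yh2 nhy by blast
  have nh2x: "\<not> E h2 x" using ins_nE x(2) by blast
  have xh2: "x \<noteq> h2" using ins_neq x(2) by blast
  have xh: "x \<noteq> h" using nh2x Ehh2 E_sym by blast
  have Ehx: "E h x" using cover x(1) xh xh2 nh2x by blast
  have par_of_h2: "R y' h2" if "y' \<in> V" "ins y' h" "E h2 y'" for y'
  proof -
    have "R y' h2 \<or> R h2 y'" using E_R that(3) by blast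
    then show ?thesis using that(2) Rhh2 by (auto simp: Ins_def Rel_def)
  qed
  have yuniq: "y' = y" if "y' \<in> V" "y' \<noteq> h" "y' \<noteq> h2" "\<not> E h y'" for y'
  proof (rule ccontr)
    assume ne: "y' \<noteq> y"
    have i': "ins y' h" using hollow_sep hh that by blast
    have E': "E h2 y'" using cover that by blast
    have "hollow y' \<or> hollow y"
      using parents_hollow[OF par_of_h2[OF that(1) i' E'] par_of_h2[OF y Eh2y] ne that(1) y(1) h2V] .
    then show False using hollow_adj hh that(2,4) yh nhy by blast
  qed
  have xuniq: "x' = x" if "x' \<in> V" "x' \<noteq> h" "x' \<noteq> h2" "\<not> E h2 x'" for x'
  proof (rule ccontr)
    assume ne: "x' \<noteq> x"
    have xS: "x \<in> V - N h2" using x(1) xh2 nh2x N_iff by blast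
    have x'S: "x' \<in> V - N h2" using that N_iff by blast
    obtain q where q: "q \<in> V - N h2" "E x q" using reach_first[OF nsc_conn[OF h2V xS x'S] ne[symmetric]] by blast
    have "q \<noteq> h" using q(1) Ehh2 E_sym N_iff by blast
    then have "E h q" using cover q(1) N_iff by blast
    then show False using tri[OF Ehx q(2)] by blast
  qed
  have Vset: "V = {x, h, h2, y}"
  proof
    show "V \<subseteq> {x, h, h2, y}"
    proof
      fix z assume zV: "z \<in> V"
      show "z \<in> {x, h, h2, y}"
      proof (cases "z = h \<or> z = h2")
        case False
        show ?thesis
        proof (cases "E h z")
          case True
          then have "\<not> E h2 z" using tri[OF Ehh2] by blast
          then show ?thesis using xuniq zV False by blast
        next
          case False2: False
          then show ?thesis using yuniq zV False by blast
        qed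
      qed auto
    qed
  qed (use x y hV h2V in auto)
  have xy: "x \<noteq> y" using Ehx nhy by blast
  show ?thesis
  proof (cases "E x y")
    case False
    have "is_path_graph V E"
    proof (rule path4[OF graph _ Vset])
      show "distinct [x, h, h2, y]" using xh xh2 xy yh yh2 Ehh2 E_V by auto
      show "E x h" "E h h2" "E h2 y" using Ehx Ehh2 Eh2y E_sym by blast+
      show "\<not> E x h2" "\<not> E x y" "\<not> E h y" using nh2x False nhy E_sym by blast+
    qed
    then show ?thesis by simp
  next
    case True
    have S: "V - {h} = {h2, x, y}" using Vset xh yh Ehh2 E_V by auto
    have tree: "is_tree_in (V - {h}) E"
      unfolding is_tree_in_def
    proof
      show "connected_in (V - {h}) E"
      proof (rule connected_center[of y])
        show "y \<in> V - {h}" using S by simp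
        show "\<And>u v. E u v \<Longrightarrow> E v u" using E_sym by blast
        fix u assume "u \<in> V - {h}"
        then have u3: "u = h2 \<or> u = x \<or> u = y" using S by simp
        have yS: "y \<in> V - {h}" "h2 \<in> V - {h}" "x \<in> V - {h}" using S by simp_all
        have Eyh2: "E y h2" "E y x" using Eh2y True E_sym by blast+
        show "reach_in (V - {h}) E y u"
          using u3 reach_refl[of "V-{h}" E y] reach_step[OF reach_refl[of "V-{h}" E y] yS(1) yS(2) Eyh2(1)]
            reach_step[OF reach_refl[of "V-{h}" E y] yS(1) yS(3) Eyh2(2)] by blast
      qed
      show "\<not> has_cycle_in (V - {h}) E"
      proof (rule small_cycle[OF graph tf])
        show "card (V - {h}) \<le> 3" unfolding S by (simp add: card_insert_if)
        show "V - {h} \<subseteq> V" by blast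
        show "finite (V - {h})" using finV by simp
      qed
    qed
    have Exx: "\<not> E x x" "\<not> E y y" "\<not> E h2 h2" "\<not> E h h" using E_V by blast+
    have sy: "E y h2" "E y x" "\<not> E x h2" "E x h" "E h2 h" "\<not> E y h" using E_sym Eh2y True nh2x Ehx Ehh2 nhy by blast+
    have n1: "{w \<in> V - {h}. E h2 w} = {y}" using S Eh2y nh2x Ehh2 Exx sy by auto
    have n2: "{w \<in> V - {h}. E x w} = {y}" using S True nh2x sy Exx by auto
    have n3: "{w \<in> V - {h}. E y w} = {h2, x}" using S True Eh2y sy Exx by auto
    have leaves: "{w \<in> V. E h w} = {v. is_leaf_in (V - {h}) E v}"
    proof (rule set_eqI)
      fix v
      have c2: "card {h2, x} = 2" using xh2 by simp
      have "v \<in> {w \<in> V. E h w} \<longleftrightarrow> v = h2 \<or> v = x"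
      proof
        assume "v \<in> {w \<in> V. E h w}"
        then have "v \<in> {x, h, h2, y}" "E h v" using Vset by blast+
        then show "v = h2 \<or> v = x" using Exx(4) nhy by blast
      next
        assume "v = h2 \<or> v = x"
        then show "v \<in> {w \<in> V. E h w}" using Ehh2 Ehx hV h2V x(1) by blast
      qed
      moreover have "is_leaf_in (V - {h}) E v \<longleftrightarrow> v = h2 \<or> v = x"
      proof
        assume l: "is_leaf_in (V - {h}) E v"
        then have "v \<in> {h2, x, y}" "card {w \<in> V - {h}. E v w} = 1" using S unfolding is_leaf_in_def by blast+
        moreover have "v \<noteq> y" using l n3 c2 unfolding is_leaf_in_def by force
        ultimately show "v = h2 \<or> v = x" by blast
      next
        assume "v = h2 \<or> v = x"
        then show "is_leaf_in (V - {h}) E v" using n1 n2 S unfolding is_leaf_in_def by force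
      qed
      ultimately show "v \<in> {w \<in> V. E h w} \<longleftrightarrow> v \<in> {v. is_leaf_in (V - {h}) E v}" by simp
    qed
    have "is_chandelier V E" unfolding is_chandelier_def using tree leaves hV by blast
    then show ?thesis by simp
  qed
qed

end

context rfg begin

lemma one_hollow:
  assumes hh: "hollow h" and uniq: "\<And>h'. hollow h' \<Longrightarrow> h' = h"
  shows "is_path_graph V E \<or> is_chandelier V E"
proof -
  define I where "I = V - N h"
  have hV: "h \<in> V" using hh hollow_def by auto
  have I_iff: "z \<in> I \<longleftrightarrow> z \<in> V \<and> z \<noteq> h \<and> \<not> E h z" for z unfolding I_def using N_iff by blast
  have Ine: "I \<noteq> {}"
  proof -
    obtain w where "w \<in> V" "ins w h" using hh hollow_def by blast
    then have "w \<in> I" using I_iff ins_neq ins_nE by blast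
    then show ?thesis by blast
  qed
  have Iconn: "reach_in I E u v" if "u \<in> I" "v \<in> I" for u v
    using nsc_conn[OF hV] that unfolding I_def by blast
  define F where "F = V - {h}"
  have IF: "I \<subseteq> F" unfolding I_def F_def closed_nbhd_def by blast
  have UPF: "UP F" unfolding UP_def
  proof (intro allI impI)
    fix v p1 p2 assume H: "v \<in> V" "p1 \<in> F" "p2 \<in> F" "R p1 v" "R p2 v"
    show "p1 = p2"
    proof (rule ccontr)
      assume "p1 \<noteq> p2"
      then have "hollow p1 \<or> hollow p2" using parents_hollow H unfolding F_def by blast
      then show False using uniq H(2,3) unfolding F_def by blast
    qed
  qed
  have FV: "F \<subseteq> V" unfolding F_def by blast
  have ONE: False if "E h x" "y1 \<in> I" "y2 \<in> I" "y1 \<noteq> y2" "E x y1" "E x y2" for x y1 y2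
  proof -
    have xV: "x \<in> V" using E_V that(1) by blast
    have i1: "ins y1 h" and i2: "ins y2 h" using hollow_sep[OF hh] that(2,3) I_iff by blast+
    have "R h x \<or> R x h" using E_R that(1) by blast
    then show False
    proof
      assume Rhx: "R h x"
      have p: "R y x" if "ins y h" "E x y" for y
      proof -
        have "R x y \<or> R y x" using E_R that(2) by blast
        then show ?thesis using that(1) Rhx by (auto simp: Ins_def Rel_def)
      qed
      have "hollow y1 \<or> hollow y2"
        using parents_hollow[OF p[OF i1 that(5)] p[OF i2 that(6)] that(4)] that(2,3) xV I_iff by blast
      then show False using uniq that(2,3) I_iff by blast
    next
      assume Rxh: "R x h"
      have p: "R x y" if "ins y h" "E x y" for y
      proof -
        have "R x y \<or> R y x" using E_R that(2) by blast
        then show ?thesis using that(1) Rxh by (auto simp: Ins_def Rel_def)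
      qed
      have xF: "x \<in> F" "x \<notin> I" using xV that(1) I_iff E_V unfolding F_def by blast+
      have "\<not> reach_in I E y1 y2"
        using SEP[OF UPF FV xF(1) that(4) p[OF i1 that(5)] p[OF i2 that(6)] _ _ IF xF(2) that(2,3)] IF that(2,3) by blast
      then show False using Iconn that(2,3) by blast
    qed
  qed
  show ?thesis
  proof (cases "\<exists>x. E h x \<and> (\<forall>y\<in>I. \<not> E x y)")
    case True
    then obtain x where x: "E h x" "\<forall>y\<in>I. \<not> E x y" by blast
    have xV: "x \<in> V" "x \<noteq> h" using E_V x(1) by blast+
    have xnb: "z = h" if "E x z" for z
    proof (rule ccontr)
      assume zh: "z \<noteq> h"
      have zV: "z \<in> V" using E_V that by blast
      show False
      proof (cases "E h z")
        case True then show False using tri[OF x(1) that] by blast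
      next
        case False then show False using x(2) zV zh I_iff that by blast
      qed
    qed
    show ?thesis
    proof (cases "\<exists>y. E h y \<and> y \<noteq> x")
      case True
      then obtain y where y: "E h y" "y \<noteq> x" by blast
      have yV: "y \<in> V" "y \<noteq> h" using E_V y(1) by blast+
      have nxy: "\<not> E x y" using tri[OF x(1) _ y(1)] by blast
      have xS: "x \<in> V - N y" using N_iff xV nxy y(2) E_sym by blast
      have Ssub: "z = x" if zS: "z \<in> V - N y" for z
      proof (rule ccontr)
        assume "z \<noteq> x"
        then obtain q where q: "q \<in> V - N y" "E x q"
          using reach_first[OF nsc_conn[OF yV(1) xS zS]] by blast
        then have "q = h" using xnb by blast
        then show False using q(1) N_iff y(1) E_sym by blast
      qed
      have IN: "E y z" if "z \<in> I" for z
      proof (rule ccontr)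
        assume "\<not> E y z"
        moreover have "z \<noteq> y" using that I_iff y(1) by blast
        ultimately have "z \<in> V - N y" using N_iff that I_iff by blast
        then have "z = x" using Ssub by blast
        then show False using that I_iff x(1) by blast
      qed
      obtain w where w: "w \<in> I" using Ine by blast
      have Iw: "z = w" if zI: "z \<in> I" for z
      proof (rule ccontr)
        assume "z \<noteq> w"
        then obtain q where q: "q \<in> I" "E w q" using reach_first[OF Iconn[OF w zI]] by metis
        show False using tri[OF IN[OF w] q(2) IN[OF q(1)]] .
      qed
      have Nh: "z = x \<or> z = y" if "E h z" for z
      proof (rule ccontr)
        assume H: "\<not> (z = x \<or> z = y)"
        have "z \<in> V" using E_V that by blast
        then have "z \<notin> V - N y" using Ssub H by blast
        then have "E y z" using N_iff H \<open>z \<in> V\<close> by blast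
        then show False using tri[OF y(1) _ that] by blast
      qed
      have Vset: "V = {x, h, y, w}"
      proof
        show "V \<subseteq> {x, h, y, w}"
        proof
          fix z assume zV: "z \<in> V"
          show "z \<in> {x, h, y, w}"
          proof (cases "z = h")
            case False
            show ?thesis
            proof (cases "E h z")
              case True then show ?thesis using Nh by blast
            next
              case False2: False
              then have "z \<in> I" using I_iff zV False by blast
              then show ?thesis using Iw by blast
            qed
          qed simp
        qed
        show "{x, h, y, w} \<subseteq> V" using xV yV hV w I_iff by blast
      qed
      have wI: "w \<in> V" "w \<noteq> h" "\<not> E h w" using w I_iff by blast+
      have "is_path_graph V E"
      proof (rule path4[OF graph _ Vset])
        show "E x h" "E h y" "E y w" using x(1) y(1) IN[OF w] E_sym by blast+
        show "\<not> E x y" "\<not> E x w" "\<not> E h w" using nxy x(2) w wI by blast+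
        have "w \<noteq> x" using wI x(1) by blast
        moreover have "w \<noteq> y" using wI y(1) by blast
        ultimately show "distinct [x, h, y, w]" using xV yV wI y(2) by auto
      qed
      then show ?thesis by simp
    next
      case False
      obtain w where w: "w \<in> I" using Ine by blast
      have "h \<in> I"
      proof (rule reach_closed[OF conn_reach[OF _ hV], where P="\<lambda>z. z \<in> I"])
        show "w \<in> V" "w \<in> I" using w I_iff by blast+
      next
        fix p q assume pq: "p \<in> V" "q \<in> V" "E p q" "p \<in> I"
        have "q \<noteq> h" using pq(3,4) I_iff E_sym by blast
        moreover have "\<not> E h q"
        proof
          assume "E h q"
          then have "q = x" using False by blast
          then show False using x(2) pq(3,4) E_sym by blast
        qed
        ultimately show "q \<in> I" using I_iff pq(2) by blast
      qed
      then show ?thesis using I_iff by blast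
    qed
  next
    case False
    then have hasI: "\<exists>y\<in>I. E x y" if "E h x" for x using that by blast
    show ?thesis
    proof (cases "\<exists>l p. l \<in> I \<and> E l p \<and> (\<forall>q. E l q \<longrightarrow> q = p)")
      case True
      then obtain l p where lp: "l \<in> I" "E l p" "\<And>q. E l q \<Longrightarrow> q = p" by blast
      have lV: "l \<in> V" "l \<noteq> h" "\<not> E h l" using lp(1) I_iff by blast+
      have pV: "p \<in> V" "p \<noteq> h" "p \<noteq> l" using E_V lp(2) lV(3) E_sym by blast+
      show ?thesis
      proof (cases "\<exists>q. E p q \<and> q \<noteq> l")
        case True
        then obtain q where q: "E p q" "q \<noteq> l" by blast
        have qV: "q \<in> V" "q \<noteq> p" using E_V q(1) by blast+
        have lS: "l \<in> V - N q" proof -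
          have "\<not> E q l" using lp(3)[of q] qV(2) E_sym by blast
          then show ?thesis using N_iff lV(1) q(2) by blast
        qed
        have Sl: "z = l" if zS: "z \<in> V - N q" for z
        proof (rule ccontr)
          assume "z \<noteq> l"
          then obtain q' where q': "q' \<in> V - N q" "E l q'"
            using reach_first[OF nsc_conn[OF qV(1) lS zS]] by metis
          then have "q' = p" using lp(3) by blast
          then show False using q'(1) N_iff q(1) E_sym by blast
        qed
        have cov: "z = l \<or> z = q \<or> E q z" if "z \<in> V" for z
          using Sl[of z] N_iff that by blast
        show ?thesis
        proof (cases "q = h")
          case True
          have Ehp: "E h p" using q(1) True E_sym by blast
          have Il: "z = l" if "z \<in> I" for z using cov[of z] that I_iff True by blast
          have Nh: "z = p" if Ehz: "E h z" for z
          proof -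
            obtain y where "y \<in> I" "E z y" using hasI[OF Ehz] by blast
            then have "E l z" using Il E_sym by blast
            then show ?thesis using lp(3) by blast
          qed
          have Vset: "V = {h, p, l}"
          proof
            show "V \<subseteq> {h, p, l}"
            proof
              fix z assume zV: "z \<in> V"
              show "z \<in> {h, p, l}"
              proof (cases "z = h")
                case False
                show ?thesis
                proof (cases "E h z")
                  case True then show ?thesis using Nh by blast
                next
                  case False2: False
                  then show ?thesis using Il I_iff zV False by blast
                qed
              qed simp
            qed
            show "{h, p, l} \<subseteq> V" using hV pV lV by blast
          qed
          have "is_path_graph V E"
          proof (rule path3[OF graph _ Vset])
            show "E h p" "E p l" "\<not> E h l" using Ehp lp(2) E_sym lV by blast+
            show "distinct [h, p, l]" using pV lV by auto
          qed
          then show ?thesis by simp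
        next
          case False
          have Eqh: "E q h" using cov[OF hV] lV(2) False by blast
          have nhp: "\<not> E h p" using tri[of h q p] Eqh q(1) E_sym by blast
          have pI: "p \<in> I" using I_iff pV nhp by blast
          have Nh: "z = q" if "E h z" for z
          proof (rule ccontr)
            assume zq: "z \<noteq> q"
            have zV: "z \<in> V" using E_V that by blast
            have "z \<noteq> l" using that lV(3) by blast
            then have "E q z" using cov[OF zV] zq by blast
            then show False using tri[of h q z] Eqh that E_sym by blast
          qed
          have Ipl: "z = p \<or> z = l" if "z \<in> I" for z
          proof (rule ccontr)
            assume H: "\<not> (z = p \<or> z = l)"
            have "z \<noteq> q" using that I_iff Eqh E_sym by blast
            then have Eqz: "E q z" using cov[of z] that I_iff H by blast
            show False using ONE[of q z p] Eqh E_sym that pI H Eqz q(1) by blast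
          qed
          have Vset: "V = {h, q, p, l}"
          proof
            show "V \<subseteq> {h, q, p, l}"
            proof
              fix z assume zV: "z \<in> V"
              show "z \<in> {h, q, p, l}"
              proof (cases "z = h")
                case False
                show ?thesis
                proof (cases "E h z")
                  case True then show ?thesis using Nh by blast
                next
                  case False2: False
                  then show ?thesis using Ipl I_iff zV False by blast
                qed
              qed simp
            qed
            show "{h, q, p, l} \<subseteq> V" using hV pV lV qV by blast
          qed
          have nql: "\<not> E q l" using lp(3) qV(2) E_sym by blast
          have "is_path_graph V E"
          proof (rule path4[OF graph _ Vset])
            show "E h q" "E q p" "E p l" using Eqh q(1) lp(2) E_sym by blast+
            show "\<not> E h p" "\<not> E h l" "\<not> E q l" using nhp lV(3) nql by blast+
            show "distinct [h, q, p, l]" using pV lV qV False q(2) by auto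
          qed
          then show ?thesis by simp
        qed
      next
        case False
        have "h \<in> {l, p}"
        proof (rule reach_closed[OF conn_reach[OF lV(1) hV], where P="\<lambda>z. z \<in> {l, p}"])
          show "l \<in> {l, p}" by simp
        next
          fix z q' assume H: "z \<in> V" "q' \<in> V" "E z q'" "z \<in> {l, p}"
          then show "q' \<in> {l, p}" using lp(3) False by blast
        qed
        then show ?thesis using lV(2) pV(2) by blast
      qed
    next
      case False
      then have B2: "\<exists>q. E l q \<and> q \<noteq> p" if "l \<in> I" "E l p" for l p using that by blast
      have tree: "is_tree_in F E"
        unfolding is_tree_in_def
      proof
        obtain w0 where w0: "w0 \<in> I" using Ine by blast
        show "connected_in F E"
        proof (rule connected_center[of w0])
          show "w0 \<in> F" using w0 IF by blast
          show "\<And>u v. E u v \<Longrightarrow> E v u" using E_sym by blast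
          fix u assume uF: "u \<in> F"
          show "reach_in F E w0 u"
          proof (cases "u \<in> I")
            case True then show ?thesis using reach_mono[OF Iconn[OF w0 True] IF] by blast
          next
            case False
            then have "E h u" using uF I_iff unfolding F_def by blast
            then obtain y where y: "y \<in> I" "E u y" using hasI by blast
            have "reach_in F E w0 y" using reach_mono[OF Iconn[OF w0 y(1)] IF] .
            moreover have "y \<in> F" using y(1) IF by blast
            ultimately show ?thesis using reach_step[of F E w0 y u] uF E_sym[OF y(2)] by blast
          qed
        qed
        show "\<not> has_cycle_in F E"
        proof
          assume "has_cycle_in F E"
          then obtain h' where "h' \<in> F" "hollow h'" using cycle_hollow FV by blast
          then show False using uniq unfolding F_def by blast
        qed
      qed
      have leaves: "{w \<in> V. E h w} = {v. is_leaf_in F E v}"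
      proof (rule set_eqI)
        fix v
        show "v \<in> {w \<in> V. E h w} \<longleftrightarrow> v \<in> {v. is_leaf_in F E v}"
        proof
          assume "v \<in> {w \<in> V. E h w}"
          then have v: "v \<in> V" "E h v" by blast+
          obtain y where y: "y \<in> I" "E v y" using hasI v(2) by blast
          have "{w \<in> F. E v w} = {y}"
          proof
            show "{y} \<subseteq> {w \<in> F. E v w}" using y IF by blast
            show "{w \<in> F. E v w} \<subseteq> {y}"
            proof
              fix z assume z: "z \<in> {w \<in> F. E v w}"
              then have "z \<noteq> h" "E v z" "z \<in> V" unfolding F_def by blast+
              moreover have "\<not> E h z" using tri[OF v(2)] z by blast
              ultimately have "z \<in> I" using I_iff by blast
              then show "z \<in> {y}" using ONE[OF v(2) _ y(1) _ _ y(2)] \<open>E v z\<close> by blast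
            qed
          qed
          moreover have "v \<in> F" using v E_V unfolding F_def by blast
          ultimately show "v \<in> {v. is_leaf_in F E v}" unfolding is_leaf_in_def by simp
        next
          assume "v \<in> {v. is_leaf_in F E v}"
          then have vF: "v \<in> F" and c1: "card {w \<in> F. E v w} = 1" unfolding is_leaf_in_def by blast+
          obtain p where p: "{w \<in> F. E v w} = {p}" using card_1_singletonE[OF c1] by blast
          show "v \<in> {w \<in> V. E h w}"
          proof (rule ccontr)
            assume "v \<notin> {w \<in> V. E h w}"
            then have vI: "v \<in> I" using vF I_iff unfolding F_def by blast
            have Evp: "E v p" using p by blast
            obtain q where q: "E v q" "q \<noteq> p" using B2[OF vI Evp] by blast
            have "q \<in> F" using q(1) E_V vI I_iff E_sym unfolding F_def by blast
            then have "q \<in> {w \<in> F. E v w}" using q(1) by blast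
            then show False using p q(2) by blast
          qed
        qed
      qed
      have "is_chandelier V E" unfolding is_chandelier_def using tree leaves hV unfolding F_def by blast
      then show ?thesis by simp
    qed
  qed
qed

end

context rfg begin
theorem rfg_main: "is_path_graph V E \<or> is_chandelier V E"
proof (cases "\<exists>h1 h2. hollow h1 \<and> hollow h2 \<and> h1 \<noteq> h2")
  case True
  then obtain h1 h2 where h: "hollow h1" "hollow h2" "h1 \<noteq> h2" by blast
  have "E h1 h2" using hollow_adj[OF h] .
  then have "R h1 h2 \<or> R h2 h1" using E_R by blast
  then show ?thesis using two_hollow[OF h(1,2)] two_hollow[OF h(2,1)] by blast
next
  case False
  show ?thesis
  proof (cases "\<exists>h. hollow h")
    case True
    then obtain h where "hollow h" by blast
    then show ?thesis using one_hollow False by blast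
  next
    case False
    then show ?thesis using no_hollow_path by blast
  qed
qed
end

theorem lemma3p12:
  fixes V :: "'a set" and E :: "'a \<Rightarrow> 'a \<Rightarrow> bool"
  assumes "graph V E"
    and "connected_in V E"
    and "triangle_free V E"
    and "\<not> has_full_star_cutset V E"
    and "restricted_frame_graph V E"
  shows "is_path_graph V E \<or> is_chandelier V E"
proof -
  obtain F :: "'a \<Rightarrow> box" where H: "(\<forall>v\<in>V. valid_box (F v)) \<and>
    (\<forall>u\<in>V. \<forall>v\<in>V. u \<noteq> v \<longrightarrow> (E u v \<longleftrightarrow> frame (F u) \<inter> frame (F v) \<noteq> {})) \<and>
    (\<forall>u\<in>V. \<forall>v\<in>V. u \<noteq> v \<longrightarrow> corners (F u) \<inter> frame (F v) = {}) \<and>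
    (\<forall>u\<in>V. \<forall>v\<in>V. u \<noteq> v \<longrightarrow> left_side (F u) \<inter> frame (F v) = {}) \<and>
    (\<forall>u\<in>V. \<forall>v\<in>V. u \<noteq> v \<longrightarrow> right_side (F u) \<inter> frame (F v) \<noteq> {} \<longrightarrow>
          right_side (F u) \<inter> top_side (F v) \<noteq> {} \<and> right_side (F u) \<inter> bottom_side (F v) \<noteq> {}) \<and>
    (\<forall>u\<in>V. \<forall>v\<in>V. u \<noteq> v \<longrightarrow> frame (F u) \<inter> frame (F v) \<noteq> {} \<longrightarrow>
          (\<forall>w\<in>V. \<not> frame (F w) \<subseteq> region (F u) \<inter> region (F v)))"
    using assms(5) unfolding restricted_frame_graph_def by (elim exE) (rule that, assumption)
  have vb: "\<forall>v\<in>V. valid_box (F v)" using H by (elim conjE) assumption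
  have ef: "\<forall>u\<in>V. \<forall>v\<in>V. u \<noteq> v \<longrightarrow> (E u v \<longleftrightarrow> frame (F u) \<inter> frame (F v) \<noteq> {})" using H by (elim conjE) assumption
  have c1: "\<forall>u\<in>V. \<forall>v\<in>V. u \<noteq> v \<longrightarrow> corners (F u) \<inter> frame (F v) = {}" using H by (elim conjE) assumption
  have c2: "\<forall>u\<in>V. \<forall>v\<in>V. u \<noteq> v \<longrightarrow> left_side (F u) \<inter> frame (F v) = {}" using H by (elim conjE) assumption
  have c3: "\<forall>u\<in>V. \<forall>v\<in>V. u \<noteq> v \<longrightarrow> right_side (F u) \<inter> frame (F v) \<noteq> {} \<longrightarrow>
          right_side (F u) \<inter> top_side (F v) \<noteq> {} \<and> right_side (F u) \<inter> bottom_side (F v) \<noteq> {}" using H by (elim conjE) assumption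
  have c4: "\<forall>u\<in>V. \<forall>v\<in>V. u \<noteq> v \<longrightarrow> frame (F u) \<inter> frame (F v) \<noteq> {} \<longrightarrow>
          (\<forall>w\<in>V. \<not> frame (F w) \<subseteq> region (F u) \<inter> region (F v))" using H by (elim conjE) assumption
  define a where "a u = fst (F u)" for u
  define b where "b u = fst (snd (F u))" for u
  define c where "c u = fst (snd (snd (F u)))" for u
  define d where "d u = snd (snd (snd (F u)))" for u
  have Fu: "F u = (a u, b u, c u, d u)" for u unfolding a_def b_def c_def d_def by simp
  have vb': "\<forall>v\<in>V. valid_box (a v, b v, c v, d v)" using vb unfolding Fu .
  have ef': "\<forall>u\<in>V. \<forall>v\<in>V. u \<noteq> v \<longrightarrow> (E u v \<longleftrightarrow> frame (a u, b u, c u, d u) \<inter> frame (a v, b v, c v, d v) \<noteq> {})"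
    using ef unfolding Fu .
  have c1': "\<forall>u\<in>V. \<forall>v\<in>V. u \<noteq> v \<longrightarrow> corners (a u, b u, c u, d u) \<inter> frame (a v, b v, c v, d v) = {}"
    using c1 unfolding Fu .
  have c2': "\<forall>u\<in>V. \<forall>v\<in>V. u \<noteq> v \<longrightarrow> left_side (a u, b u, c u, d u) \<inter> frame (a v, b v, c v, d v) = {}"
    using c2 unfolding Fu .
  have c3': "\<forall>u\<in>V. \<forall>v\<in>V. u \<noteq> v \<longrightarrow> right_side (a u, b u, c u, d u) \<inter> frame (a v, b v, c v, d v) \<noteq> {} \<longrightarrow>
          right_side (a u, b u, c u, d u) \<inter> top_side (a v, b v, c v, d v) \<noteq> {} \<and> right_side (a u, b u, c u, d u) \<inter> bottom_side (a v, b v, c v, d v) \<noteq> {}"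
    using c3 unfolding Fu .
  have c4': "\<forall>u\<in>V. \<forall>v\<in>V. u \<noteq> v \<longrightarrow> frame (a u, b u, c u, d u) \<inter> frame (a v, b v, c v, d v) \<noteq> {} \<longrightarrow>
          (\<forall>w\<in>V. \<not> frame (a w, b w, c w, d w) \<subseteq> region (a u, b u, c u, d u) \<inter> region (a v, b v, c v, d v))"
    using c4 unfolding Fu .
  have val: "a u < b u \<and> c u < d u" if "u \<in> V" for u
    using vb' that unfolding valid_box_def by simp
  have RRiff: "RR (a u) (b u) (c u) (d u) (a v) (b v) (c v) (d v) \<longleftrightarrow> Rel a b c d u v" for u v
    by (simp add: RR_def Rel_def)
  have INSiff: "INS (a u) (b u) (c u) (d u) (a v) (b v) (c v) (d v) \<longleftrightarrow> Ins a b c d u v" for u v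
    by (simp add: INS_def Ins_def)
  have R_int: "frame (a u, b u, c u, d u) \<inter> frame (a v, b v, c v, d v) \<noteq> {}" if "Rel a b c d u v" "v \<in> V" for u v
    using geo_RR_int[of "a u" "b u" "c u" "d u" "a v" "b v" "c v" "d v"] that val[of v] RRiff by blast
  interpret rfg V E a b c d
  proof
    show "graph V E" "connected_in V E" "triangle_free V E" "\<not> has_full_star_cutset V E" by fact+
    show "\<And>u. u \<in> V \<Longrightarrow> a u < b u \<and> c u < d u" using val by blast
  next
    fix u v assume uv: "u \<in> V" "v \<in> V" "E u v"
    have ne: "u \<noteq> v" using assms(1) uv(3) unfolding graph_def by blast
    have int: "frame (a u, b u, c u, d u) \<inter> frame (a v, b v, c v, d v) \<noteq> {}" using ef'[rule_format, OF uv(1,2) ne] uv(3) by blast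
    have "RR (a u) (b u) (c u) (d u) (a v) (b v) (c v) (d v) \<or> RR (a v) (b v) (c v) (d v) (a u) (b u) (c u) (d u)"
    proof (rule geo_edge)
      show "a u < b u" "c u < d u" using val[OF uv(1)] by auto
      show "a v < b v" "c v < d v" using val[OF uv(2)] by auto
      show "corners (a u, b u, c u, d u) \<inter> frame (a v, b v, c v, d v) = {}" by (rule c1'[rule_format, OF uv(1,2) ne])
      show "corners (a v, b v, c v, d v) \<inter> frame (a u, b u, c u, d u) = {}" by (rule c1'[rule_format, OF uv(2,1) ne[symmetric]])
      show "left_side (a u, b u, c u, d u) \<inter> frame (a v, b v, c v, d v) = {}" by (rule c2'[rule_format, OF uv(1,2) ne])
      show "left_side (a v, b v, c v, d v) \<inter> frame (a u, b u, c u, d u) = {}" by (rule c2'[rule_format, OF uv(2,1) ne[symmetric]])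
      show "right_side (a u, b u, c u, d u) \<inter> frame (a v, b v, c v, d v) \<noteq> {} \<longrightarrow>
          right_side (a u, b u, c u, d u) \<inter> top_side (a v, b v, c v, d v) \<noteq> {} \<and> right_side (a u, b u, c u, d u) \<inter> bottom_side (a v, b v, c v, d v) \<noteq> {}"
        using c3'[rule_format, OF uv(1,2) ne] by blast
      show "right_side (a v, b v, c v, d v) \<inter> frame (a u, b u, c u, d u) \<noteq> {} \<longrightarrow>
          right_side (a v, b v, c v, d v) \<inter> top_side (a u, b u, c u, d u) \<noteq> {} \<and> right_side (a v, b v, c v, d v) \<inter> bottom_side (a u, b u, c u, d u) \<noteq> {}"
        using c3'[rule_format, OF uv(2,1) ne[symmetric]] by blast
      show "frame (a u, b u, c u, d u) \<inter> frame (a v, b v, c v, d v) \<noteq> {}" using int by blast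
    qed
    then show "Rel a b c d u v \<or> Rel a b c d v u" using RRiff by blast
  next
    fix u v assume uv: "u \<in> V" "v \<in> V" "Rel a b c d u v"
    have ne: "u \<noteq> v" using uv(3) by (auto simp: Rel_def)
    show "E u v" using R_int[OF uv(3,2)] ef'[rule_format, OF uv(1,2) ne] by blast
  next
    fix u v assume uv: "u \<in> V" "v \<in> V" "u \<noteq> v" "\<not> E u v"
    have dis: "frame (a u, b u, c u, d u) \<inter> frame (a v, b v, c v, d v) = {}" using ef'[rule_format, OF uv(1,2,3)] uv(4) by blast
    have "b u < a v \<or> b v < a u \<or> d u < c v \<or> d v < c u \<or>
      INS (a u) (b u) (c u) (d u) (a v) (b v) (c v) (d v) \<or> INS (a v) (b v) (c v) (d v) (a u) (b u) (c u) (d u)"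
      using val[OF uv(1)] val[OF uv(2)] by (intro geo_nonint[OF _ _ _ _ dis]) auto
    then show "b u < a v \<or> b v < a u \<or> d u < c v \<or> d v < c u \<or> Ins a b c d u v \<or> Ins a b c d v u"
      using INSiff by blast
  next
    fix u v w assume uvw: "u \<in> V" "v \<in> V" "w \<in> V" "Rel a b c d u v"
    have ne: "u \<noteq> v" using uvw(4) by (auto simp: Rel_def)
    have nsub: "\<not> frame (a w, b w, c w, d w) \<subseteq> region (a u, b u, c u, d u) \<inter> region (a v, b v, c v, d v)"
      using c4'[rule_format, OF uvw(1,2) ne R_int[OF uvw(4,2)] uvw(3)] .
    show "\<not> (a v \<le> a w \<and> b w \<le> b u \<and> c v \<le> c w \<and> d w \<le> d v)"
    proof
      assume H: "a v \<le> a w \<and> b w \<le> b u \<and> c v \<le> c w \<and> d w \<le> d v"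
      have "frame (a w, b w, c w, d w) \<subseteq> region (a u, b u, c u, d u) \<inter> region (a v, b v, c v, d v)"
        using geo_lens[of "a u" "b u" "c u" "d u" "a v" "b v" "c v" "d v" "a w" "b w" "c w" "d w"]
          uvw(4) RRiff val[OF uvw(3)] H by blast
      then show False using nsub by blast
    qed
  qed
  show ?thesis by (rule rfg_main)
qed

end
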